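(* Let $A$ be a primitive axial algebra of Jordan type $\eta$, and let $\mathcal A$ be a set of $\eta$-axes generating $A$ such that the graph $\Delta_{\mathcal A}$ is connected. Suppose there are distinct $a,b\in\mathcal A$ with $\tau(a)=\tau(b)\ne\mathrm{id}$. Then $\eta=\tfrac12$, $a+b$ is the identity element of $A$, and $A$ is a Jordan algebra of Clifford type, i.e. $A\cong J(V,B)$ for some $\mathbb F$-vector space $V$ with symmetric bilinear form $B$.
   Context: Throughout, $\mathbb F$ is a field of characteristic $\neq 2$ and $\eta\in\mathbb F\setminus\{0,1\}$. Let $A$ be a commutative, not necessarily associative $\mathbb F$-algebra. For $a\in A$ and $\lambda\in\mathbb F$ put $A_\lambda(a)=\{x\in A: xa=\lambda x\}$. An $\eta$-axis of $A$ is an element $a$ with $a^2=a$ such that $A=A_1(a)\oplus A_0(a)\oplus A_\eta(a)$, $A_1(a)=\mathbb F a$, and, writing $A_+(a)=A_1(a)\oplus A_0(a)$ and $A_-(a)=A_\eta(a)$, one has $A_+(a)A_+(a)\subseteq A_+(a)$, $A_+(a)A_-(a)\subseteq A_-(a)$, $A_-(a)A_-(a)\subseteq A_+(a)$ and $A_0(a)A_0(a)\subseteq A_0(a)$. $A$ is a primitive axial algebra of Jordan type $\eta$ if it is generated as an algebra by $\eta$-axes. For an $\eta$-axis $a$, the Miyamoto involution $\tau(a)$ is the automorphism of $A$ acting as the identity on $A_+(a)$ and as $-1$ on $A_-(a)$. For a set $\mathcal B$ of $\eta$-axes, $\Delta_{\mathcal B}$ is the graph with vertex set $\mathcal B$ in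 which distinct $x,y$ are adjacent iff $xy\neq 0$. For a symmetric bilinear form $B$ on an $\mathbb F$-vector space $V$, $J(V,B)$ is the algebra $\mathbb F\mathbf e\oplus V$ with product $(\alpha\mathbf e+u)(\beta\mathbf e+v)=(\alpha\beta+B(u,v))\mathbf e+\alpha v+\beta u$. *)

theory Defs
  imports Complex_Main
begin

definition comm_algebra :: "('f::field \<Rightarrow> 'v::ab_group_add \<Rightarrow> 'v) \<Rightarrow> ('v \<Rightarrow> 'v \<Rightarrow> 'v) \<Rightarrow> bool" where
  "comm_algebra sc m \<longleftrightarrow> vector_space sc
     \<and> (\<forall>x y. m x y = m y x)
     \<and> (\<forall>x y z. m (x + y) z = m x z + m y z)
     \<and> (\<forall>c x y. m (sc c x) y = sc c (m x y))"

definition eigsp :: "('f \<Rightarrow> 'v \<Rightarrow> 'v) \<Rightarrow> ('v \<Rightarrow> 'v \<Rightarrow> 'v) \<Rightarrow> 'v \<Rightarrow> 'f \<Rightarrow> 'v set" where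
  "eigsp sc m a t = {x. m x a = sc t x}"

definition Aplus :: "('f::field \<Rightarrow> 'v::ab_group_add \<Rightarrow> 'v) \<Rightarrow> ('v \<Rightarrow> 'v \<Rightarrow> 'v) \<Rightarrow> 'v \<Rightarrow> 'v set" where
  "Aplus sc m a = {u + v | u v. u \<in> eigsp sc m a 1 \<and> v \<in> eigsp sc m a 0}"

definition Aminus :: "('f::field \<Rightarrow> 'v::ab_group_add \<Rightarrow> 'v) \<Rightarrow> ('v \<Rightarrow> 'v \<Rightarrow> 'v) \<Rightarrow> 'f \<Rightarrow> 'v \<Rightarrow> 'v set" where
  "Aminus sc m \<eta> a = eigsp sc m a \<eta>"

definition prod_in :: "('v \<Rightarrow> 'v \<Rightarrow> 'v) \<Rightarrow> 'v set \<Rightarrow> 'v set \<Rightarrow> 'v set \<Rightarrow> bool" where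
  "prod_in m X Y Z \<longleftrightarrow> (\<forall>x\<in>X. \<forall>y\<in>Y. m x y \<in> Z)"

definition is_axis :: "('f::field \<Rightarrow> 'v::ab_group_add \<Rightarrow> 'v) \<Rightarrow> ('v \<Rightarrow> 'v \<Rightarrow> 'v) \<Rightarrow> 'f \<Rightarrow> 'v \<Rightarrow> bool" where
  "is_axis sc m \<eta> a \<longleftrightarrow>
     m a a = a
     \<and> (\<forall>x. \<exists>!t. fst t \<in> eigsp sc m a 1 \<and> fst (snd t) \<in> eigsp sc m a 0
                 \<and> snd (snd t) \<in> eigsp sc m a \<eta> \<and> x = fst t + fst (snd t) + snd (snd t))
     \<and> eigsp sc m a 1 = range (\<lambda>c. sc c a)
     \<and> prod_in m (Aplus sc m a) (Aplus sc m a) (Aplus sc m a)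
     \<and> prod_in m (Aplus sc m a) (Aminus sc m \<eta> a) (Aminus sc m \<eta> a)
     \<and> prod_in m (Aminus sc m \<eta> a) (Aminus sc m \<eta> a) (Aplus sc m a)
     \<and> prod_in m (eigsp sc m a 0) (eigsp sc m a 0) (eigsp sc m a 0)"

definition miyamoto :: "('f::field \<Rightarrow> 'v::ab_group_add \<Rightarrow> 'v) \<Rightarrow> ('v \<Rightarrow> 'v \<Rightarrow> 'v) \<Rightarrow> 'f \<Rightarrow> 'v \<Rightarrow> 'v \<Rightarrow> 'v" where
  "miyamoto sc m \<eta> a x = (THE y. \<exists>u v. u \<in> Aplus sc m a \<and> v \<in> Aminus sc m \<eta> a \<and> x = u + v \<and> y = u - v)"

definition subalgebra :: "('f \<Rightarrow> 'v::ab_group_add \<Rightarrow> 'v) \<Rightarrow> ('v \<Rightarrow> 'v \<Rightarrow> 'v) \<Rightarrow> 'v set \<Rightarrow> bool" where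
  "subalgebra sc m S \<longleftrightarrow> 0 \<in> S \<and> (\<forall>x\<in>S. \<forall>y\<in>S. x + y \<in> S \<and> m x y \<in> S) \<and> (\<forall>c. \<forall>x\<in>S. sc c x \<in> S)"

definition generated :: "('f \<Rightarrow> 'v::ab_group_add \<Rightarrow> 'v) \<Rightarrow> ('v \<Rightarrow> 'v \<Rightarrow> 'v) \<Rightarrow> 'v set \<Rightarrow> 'v set" where
  "generated sc m X = \<Inter> {S. subalgebra sc m S \<and> X \<subseteq> S}"

definition primitive_axial_jordan :: "('f::field \<Rightarrow> 'v::ab_group_add \<Rightarrow> 'v) \<Rightarrow> ('v \<Rightarrow> 'v \<Rightarrow> 'v) \<Rightarrow> 'f \<Rightarrow> bool" where
  "primitive_axial_jordan sc m \<eta> \<longleftrightarrow> comm_algebra sc m \<and> generated sc m {a. is_axis sc m \<eta> a} = UNIV"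

definition delta_connected :: "('v::zero \<Rightarrow> 'v \<Rightarrow> 'v) \<Rightarrow> 'v set \<Rightarrow> bool" where
  "delta_connected m X \<longleftrightarrow>
     (\<forall>x\<in>X. \<forall>y\<in>X. (\<lambda>u v. u \<in> X \<and> v \<in> X \<and> u \<noteq> v \<and> m u v \<noteq> 0)\<^sup>*\<^sup>* x y)"

text \<open>The algebra J(V,B) = F e + V, with elements represented as pairs (alpha, v), v in V.\<close>
definition Jprod :: "('f::field \<Rightarrow> 'v::ab_group_add \<Rightarrow> 'v) \<Rightarrow> ('v \<Rightarrow> 'v \<Rightarrow> 'f) \<Rightarrow> 'f \<times> 'v \<Rightarrow> 'f \<times> 'v \<Rightarrow> 'f \<times> 'v" where
  "Jprod sc B p q = (fst p * fst q + B (snd p) (snd q), sc (fst p) (snd q) + sc (fst q) (snd p))"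

definition sym_bilinear_on :: "('f::field \<Rightarrow> 'v::ab_group_add \<Rightarrow> 'v) \<Rightarrow> 'v set \<Rightarrow> ('v \<Rightarrow> 'v \<Rightarrow> 'f) \<Rightarrow> bool" where
  "sym_bilinear_on sc V B \<longleftrightarrow>
     (\<forall>u\<in>V. \<forall>v\<in>V. B u v = B v u)
     \<and> (\<forall>u\<in>V. \<forall>u'\<in>V. \<forall>v\<in>V. B (u + u') v = B u v + B u' v)
     \<and> (\<forall>c. \<forall>u\<in>V. \<forall>v\<in>V. B (sc c u) v = c * B u v)"

definition clifford_type :: "('f::field \<Rightarrow> 'v::ab_group_add \<Rightarrow> 'v) \<Rightarrow> ('v \<Rightarrow> 'v \<Rightarrow> 'v) \<Rightarrow> bool" where
  "clifford_type sc m \<longleftrightarrow>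
    (\<exists>V B \<phi>. module.subspace sc V \<and> sym_bilinear_on sc V B
       \<and> bij_betw \<phi> (UNIV \<times> V) UNIV
       \<and> (\<forall>p\<in>UNIV \<times> V. \<forall>q\<in>UNIV \<times> V. \<phi> (fst p + fst q, snd p + snd q) = \<phi> p + \<phi> q)
       \<and> (\<forall>c. \<forall>p\<in>UNIV \<times> V. \<phi> (c * fst p, sc c (snd p)) = sc c (\<phi> p))
       \<and> (\<forall>p\<in>UNIV \<times> V. \<forall>q\<in>UNIV \<times> V. \<phi> (Jprod sc B p q) = m (\<phi> p) (\<phi> q)))"

end

theory Submission
  imports Defs
begin

lemma S1: fixes \<alpha> \<eta> h :: "'a::field" assumes h: "h + h = 1" and E: "\<alpha> * \<eta> + \<eta> * h - \<eta> * \<eta> = (1 - \<eta>) * \<alpha>"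
  and ne: "1 - 2 * \<eta> \<noteq> 0" shows "\<alpha> = \<eta> * h"
proof -
  have "(1 - 2 * \<eta>) * (\<alpha> - \<eta> * h) = 0" using E h by algebra
  then show ?thesis using ne by simp
qed
lemma S2: fixes \<alpha> \<beta> \<eta> h :: "'a::field" assumes h: "h + h = 1" and E: "\<eta> * (\<alpha> - \<alpha> * \<alpha>) = (1 - \<eta>) * \<beta> * \<alpha>"
  and a: "\<alpha> = \<eta> * h" and b: "\<beta> = \<eta> * h" and e0: "\<eta> \<noteq> 0" shows False
proof -
  have "\<eta> * \<eta> = 0" using E h unfolding a b by algebra
  then show False using e0 by simp
qed

lemma S3: fixes p q k \<alpha> \<beta> \<eta> :: "'a::field" assumes "p * \<alpha> = k * \<alpha>" "q * \<beta> = k * \<beta>" "k = (p + q) * \<eta>" "\<eta> + \<eta> = 1" "\<alpha> + \<beta> = 1"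
  shows "p = q"
  using assms by algebra

locale AX =
  fixes sc :: "'f::field \<Rightarrow> 'v::ab_group_add \<Rightarrow> 'v" and m :: "'v \<Rightarrow> 'v \<Rightarrow> 'v" and \<eta> :: 'f
  assumes CA: "comm_algebra sc m" and two: "(2::'f) \<noteq> 0" and eta0: "\<eta> \<noteq> 0" and eta1: "\<eta> \<noteq> 1"
begin

lemma vs: "vector_space sc" using CA by (simp add: comm_algebra_def)
sublocale vector_space sc by (rule vs)

lemma mcomm: "m x y = m y x" using CA unfolding comm_algebra_def by blast
lemma madd1: "m (x + y) z = m x z + m y z" using CA unfolding comm_algebra_def by blast
lemma msc1: "m (sc c x) y = sc c (m x y)" using CA unfolding comm_algebra_def by blast
lemma madd2: "m z (x + y) = m z x + m z y" 
  by (subst (1 2 3) mcomm, rule madd1)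
lemma msc2: "m y (sc c x) = sc c (m y x)" by (subst (1 2) mcomm, rule msc1)
lemma m01: "m 0 y = 0"
proof -
  have "m (0+0) y = m 0 y + m 0 y" by (rule madd1)
  then show ?thesis by simp
qed
lemma m02: "m y 0 = 0" by (subst mcomm, rule m01)
lemma mneg1: "m (-x) y = - m x y"
proof -
  have "m (-x + x) y = m (-x) y + m x y" by (rule madd1)
  then have "m (-x) y + m x y = 0" by (simp add: m01)
  then show ?thesis by (simp add: eq_neg_iff_add_eq_0)
qed
lemma mneg2: "m y (-x) = - m y x" by (subst mcomm, subst (2) mcomm, rule mneg1)
lemma mdiff1: "m (x - y) z = m x z - m y z" by (simp only: diff_conv_add_uminus madd1 mneg1)
lemma mdiff2: "m z (x - y) = m z x - m z y" by (simp only: diff_conv_add_uminus madd2 mneg2)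
lemmas mlin = madd1 madd2 msc1 msc2 m01 m02 mneg1 mneg2 mdiff1 mdiff2

abbreviation E where "E x t \<equiv> eigsp sc m x t"
abbreviation ax where "ax x \<equiv> is_axis sc m \<eta> x"

lemma memE: "u \<in> E x t \<longleftrightarrow> m x u = sc t u" unfolding eigsp_def using mcomm[of u x] by simp

lemma E_add: "u \<in> E x t \<Longrightarrow> v \<in> E x t \<Longrightarrow> u + v \<in> E x t" by (simp add: memE madd2 scale_right_distrib)
lemma E_sc: "u \<in> E x t \<Longrightarrow> sc c u \<in> E x t" by (simp add: memE msc2 scale_left_commute)
lemma E_0: "0 \<in> E x t" by (simp add: memE m02)
lemma E_neg: "u \<in> E x t \<Longrightarrow> - u \<in> E x t" by (simp add: memE mneg2)
lemma E_diff: "u \<in> E x t \<Longrightarrow> v \<in> E x t \<Longrightarrow> u - v \<in> E x t" by (simp add: memE mdiff2 scale_right_diff_distrib)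
lemma E_disj: "s \<noteq> t \<Longrightarrow> u \<in> E x s \<Longrightarrow> u \<in> E x t \<Longrightarrow> u = 0"
  by (simp add: memE)

lemma ax_idem: "ax x \<Longrightarrow> m x x = x" by (simp add: is_axis_def)
lemma ax_E1: "ax x \<Longrightarrow> E x 1 = range (\<lambda>c. sc c x)" by (simp add: is_axis_def)
lemma ax_ex1: "ax x \<Longrightarrow> \<exists>!t. fst t \<in> E x 1 \<and> fst (snd t) \<in> E x 0 \<and> snd (snd t) \<in> E x \<eta> \<and> u = fst t + fst (snd t) + snd (snd t)"
  unfolding is_axis_def by blast

definition dec where "dec x u = (THE t. fst t \<in> E x 1 \<and> fst (snd t) \<in> E x 0 \<and> snd (snd t) \<in> E x \<eta> \<and> u = fst t + fst (snd t) + snd (snd t))"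
definition "pr1 x u = fst (dec x u)"
definition "pr0 x u = fst (snd (dec x u))"
definition "pre x u = snd (snd (dec x u))"
definition "lam x u = (THE c. pr1 x u = sc c x)"

lemma dec_props: assumes "ax x" shows "pr1 x u \<in> E x 1" "pr0 x u \<in> E x 0" "pre x u \<in> E x \<eta>" "u = pr1 x u + pr0 x u + pre x u"
  using theI'[OF ax_ex1[OF assms, of u]] unfolding dec_def pr1_def pr0_def pre_def by auto

lemma dec_eq: assumes "ax x" "u1 \<in> E x 1" "u0 \<in> E x 0" "ue \<in> E x \<eta>" "u = u1 + u0 + ue"
  shows "pr1 x u = u1" "pr0 x u = u0" "pre x u = ue"
proof -
  have "dec x u = (u1,u0,ue)" unfolding dec_def by (rule the1_equality[OF ax_ex1[OF assms(1)]]) (simp add: assms)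
  then show "pr1 x u = u1" "pr0 x u = u0" "pre x u = ue" by (simp_all add: pr1_def pr0_def pre_def)
qed

lemma scE1: "ax x \<Longrightarrow> sc c x \<in> E x 1" by (simp add: memE msc2 ax_idem)

lemma lam: assumes "ax x" "x \<noteq> 0" shows "pr1 x u = sc (lam x u) x"
proof -
  obtain c where c: "pr1 x u = sc c x" using dec_props(1)[OF assms(1), of u] ax_E1[OF assms(1)] by auto
  have "lam x u = c" unfolding lam_def by (rule the_equality) (use c assms(2) in auto)
  then show ?thesis using c by simp
qed

lemma lam_eq: assumes "ax x" "x \<noteq> 0" "u0 \<in> E x 0" "ue \<in> E x \<eta>" "u = sc c x + u0 + ue"
  shows "lam x u = c" "pr0 x u = u0" "pre x u = ue"
proof -
  have "pr1 x u = sc c x" by (rule dec_eq(1)[OF assms(1) scE1[OF assms(1)] assms(3-5)])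
  then show "lam x u = c" using lam[OF assms(1,2), of u] assms(2) by simp
  show "pr0 x u = u0" "pre x u = ue" by (rule dec_eq[OF assms(1) scE1[OF assms(1)] assms(3-5)])+
qed

lemma dec_lam: assumes "ax x" "x \<noteq> 0" shows "u = sc (lam x u) x + pr0 x u + pre x u"
  using dec_props(4)[OF assms(1), of u] lam[OF assms] by simp

context fixes x assumes axx: "ax x" and x0: "x \<noteq> 0"
begin
lemma lin_add: "lam x (u + v) = lam x u + lam x v \<and> pr0 x (u + v) = pr0 x u + pr0 x v \<and> pre x (u + v) = pre x u + pre x v"
proof -
  have "u + v = (sc (lam x u) x + pr0 x u + pre x u) + (sc (lam x v) x + pr0 x v + pre x v)"
    using dec_lam[OF axx x0, of u] dec_lam[OF axx x0, of v] by (rule arg_cong2)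
  also have "\<dots> = sc (lam x u + lam x v) x + (pr0 x u + pr0 x v) + (pre x u + pre x v)"
    by (simp add: scale_left_distrib algebra_simps)
  finally have "u + v = sc (lam x u + lam x v) x + (pr0 x u + pr0 x v) + (pre x u + pre x v)" .
  from lam_eq[OF axx x0 E_add[OF dec_props(2)[OF axx] dec_props(2)[OF axx]] E_add[OF dec_props(3)[OF axx] dec_props(3)[OF axx]] this]
  show ?thesis by simp
qed
lemma lin_sc: "lam x (sc c u) = c * lam x u \<and> pr0 x (sc c u) = sc c (pr0 x u) \<and> pre x (sc c u) = sc c (pre x u)"
proof -
  have "sc c u = sc (c * lam x u) x + sc c (pr0 x u) + sc c (pre x u)"
    using dec_lam[OF axx x0, of u] by (metis scale_right_distrib scale_scale)
  from lam_eq[OF axx x0 E_sc[OF dec_props(2)[OF axx]] E_sc[OF dec_props(3)[OF axx]] this]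
  show ?thesis by simp
qed
lemma lin_neg: "lam x (- u) = - lam x u \<and> pr0 x (- u) = - pr0 x u \<and> pre x (- u) = - pre x u"
  using lin_sc[of "-1" u] by simp
lemma lin_diff: "lam x (u - v) = lam x u - lam x v \<and> pr0 x (u - v) = pr0 x u - pr0 x v \<and> pre x (u - v) = pre x u - pre x v"
  using lin_add[of u "-v"] lin_neg[of v] by simp
lemma lam_add[simp]: "lam x (u + v) = lam x u + lam x v" using lin_add by blast
lemma pr0_add[simp]: "pr0 x (u + v) = pr0 x u + pr0 x v" using lin_add by blast
lemma pre_add[simp]: "pre x (u + v) = pre x u + pre x v" using lin_add by blast
lemma lam_sc[simp]: "lam x (sc c u) = c * lam x u" using lin_sc by blast
lemma pr0_sc[simp]: "pr0 x (sc c u) = sc c (pr0 x u)" using lin_sc by blast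
lemma pre_sc[simp]: "pre x (sc c u) = sc c (pre x u)" using lin_sc by blast
lemma lam_neg[simp]: "lam x (- u) = - lam x u" using lin_neg by blast
lemma pr0_neg[simp]: "pr0 x (- u) = - pr0 x u" using lin_neg by blast
lemma pre_neg[simp]: "pre x (- u) = - pre x u" using lin_neg by blast
lemma lam_diff[simp]: "lam x (u - v) = lam x u - lam x v" using lin_diff by blast
lemma pr0_diff[simp]: "pr0 x (u - v) = pr0 x u - pr0 x v" using lin_diff by blast
lemma pre_diff[simp]: "pre x (u - v) = pre x u - pre x v" using lin_diff by blast
lemma lam_self[simp]: "lam x x = 1" and pr0_self[simp]: "pr0 x x = 0" and pre_self[simp]: "pre x x = 0"
  using lam_eq[OF axx x0 E_0 E_0, of x 1] by simp_all
lemma lam_zero[simp]: "lam x 0 = 0" and pr0_zero[simp]: "pr0 x 0 = 0" and pre_zero[simp]: "pre x 0 = 0"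
  using lam_eq[OF axx x0 E_0 E_0, of 0 0] by simp_all
lemma on_E0: "u \<in> E x 0 \<Longrightarrow> lam x u = 0 \<and> pr0 x u = u \<and> pre x u = 0"
  using lam_eq[OF axx x0 _ E_0, of u u 0] by simp
lemma on_Ee: "u \<in> E x \<eta> \<Longrightarrow> lam x u = 0 \<and> pr0 x u = 0 \<and> pre x u = u"
  using lam_eq[OF axx x0 E_0 _, of u u 0] by simp
lemma mx_dec: "m x u = sc (lam x u) x + sc \<eta> (pre x u)"
proof -
  have "m x u = m x (sc (lam x u) x) + m x (pr0 x u) + m x (pre x u)"
    by (subst dec_lam[OF axx x0, of u]) (simp add: madd2)
  then show ?thesis using dec_props(2,3)[OF axx, of u] by (simp add: memE msc2 ax_idem[OF axx])
qed
lemma ax_quad: "m x (m x u) - sc \<eta> (m x u) = sc ((1 - \<eta>) * lam x u) x"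
proof -
  have "m x (m x u) = sc (lam x u) x + sc (\<eta> * \<eta>) (pre x u)"
    using dec_props(3)[OF axx, of u] by (simp add: mx_dec madd2 msc2 ax_idem[OF axx] memE)
  then show ?thesis by (simp add: mx_dec algebra_simps scale_right_diff_distrib)
qed
end

lemma f00: "ax x \<Longrightarrow> u \<in> E x 0 \<Longrightarrow> v \<in> E x 0 \<Longrightarrow> m u v \<in> E x 0"
  unfolding is_axis_def prod_in_def by blast
lemma f0e: assumes "ax x" "u \<in> E x 0" "v \<in> E x \<eta>" shows "m u v \<in> E x \<eta>"
proof -
  have "u \<in> Aplus sc m x" unfolding Aplus_def using E_0[of x 1] assms(2) by force
  moreover have "v \<in> Aminus sc m \<eta> x" using assms(3) by (simp add: Aminus_def)
  ultimately show ?thesis using assms(1) unfolding is_axis_def prod_in_def Aminus_def by blast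
qed
lemma fe0: "ax x \<Longrightarrow> u \<in> E x \<eta> \<Longrightarrow> v \<in> E x 0 \<Longrightarrow> m u v \<in> E x \<eta>"
  using f0e[of x v u] mcomm[of u v] by simp
lemma fee: assumes "ax x" "u \<in> E x \<eta>" "v \<in> E x \<eta>" shows "pre x (m u v) = 0"
proof -
  have "m u v \<in> Aplus sc m x" using assms unfolding is_axis_def prod_in_def Aminus_def by blast
  then obtain p q where "p \<in> E x 1" "q \<in> E x 0" "m u v = p + q" unfolding Aplus_def by blast
  then show ?thesis using dec_eq(3)[OF assms(1), of p q 0 "m u v"] E_0 by simp
qed

lemma tau_eq: assumes "ax x" shows "miyamoto sc m \<eta> x u = pr1 x u + pr0 x u - pre x u"
  unfolding miyamoto_def
proof (rule the_equality)
  show "\<exists>u' v. u' \<in> Aplus sc m x \<and> v \<in> Aminus sc m \<eta> x \<and> u = u' + v \<and> pr1 x u + pr0 x u - pre x u = u' - v"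
    apply (rule exI[of _ "pr1 x u + pr0 x u"], rule exI[of _ "pre x u"])
    using dec_props[OF assms, of u] unfolding Aplus_def Aminus_def by auto
next
  fix y assume "\<exists>u' v. u' \<in> Aplus sc m x \<and> v \<in> Aminus sc m \<eta> x \<and> u = u' + v \<and> y = u' - v"
  then obtain p q v where "p \<in> E x 1" "q \<in> E x 0" "v \<in> E x \<eta>" "u = p + q + v" "y = p + q - v"
    unfolding Aplus_def Aminus_def by blast
  then show "y = pr1 x u + pr0 x u - pre x u" using dec_eq[OF assms, of p q v u] by simp
qed

lemma L1: assumes axx: "ax x" and axy: "ax y" and x0: "x \<noteq> 0" and y0: "y \<noteq> 0"
  shows "lam x y * (lam x y - lam y x) = 0"
proof -
  define \<phi> where "\<phi> = lam x y"
  define \<psi> where "\<psi> = lam y x"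
  define u0 where "u0 = pr0 x y"
  define ue where "ue = pre x y"
  define \<kappa> where "\<kappa> = lam x (m ue ue)"
  have hy: "y = sc \<phi> x + u0 + ue" unfolding \<phi>_def u0_def ue_def by (rule dec_lam[OF axx x0])
  have u0E: "u0 \<in> E x 0" and ueE: "ue \<in> E x \<eta>" unfolding u0_def ue_def using dec_props[OF axx] by auto
  note simps = lam_add[OF axx x0] lam_sc[OF axx x0] lam_self[OF axx x0] madd1 madd2 msc1 msc2 ax_idem[OF axx]
  have m1: "m x u0 = 0" "m u0 x = 0" using u0E memE mcomm by (auto)
  have m2: "m x ue = sc \<eta> ue" "m ue x = sc \<eta> ue" using ueE memE mcomm by auto
  have l1: "lam x (m u0 u0) = 0" "lam x (m u0 ue) = 0" "lam x (m ue u0) = 0" "lam x ue = 0" "lam x u0 = 0"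
    using on_E0[OF axx x0 f00[OF axx u0E u0E]] on_Ee[OF axx x0 f0e[OF axx u0E ueE]]
      on_Ee[OF axx x0 fe0[OF axx ueE u0E]] on_Ee[OF axx x0 ueE] on_E0[OF axx x0 u0E] by auto
  have "lam x (m y y) = \<phi>" using ax_idem[OF axy] \<phi>_def by simp
  moreover have "m y y = m (sc \<phi> x + u0 + ue) (sc \<phi> x + u0 + ue)" using hy by simp
  ultimately have k: "\<phi> = \<phi> * \<phi> + \<kappa>" unfolding \<kappa>_def by (simp add: simps m1 m2 l1 m01 m02)
  have yx: "m y x = sc \<phi> x + sc \<eta> ue" using mx_dec[OF axx x0, of y] mcomm[of y x] \<phi>_def ue_def by simp
  have lyx: "lam x (m y x) = \<phi>" using yx l1 by (simp add: simps)
  have mye: "m y ue = sc \<phi> (m x ue) + m u0 ue + m ue ue" using hy by (simp add: madd1 msc1)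
  have lye: "lam x (m y ue) = \<kappa>" unfolding mye \<kappa>_def by (simp add: simps m2 l1)
  have Q: "m y (m y x) - sc \<eta> (m y x) = sc ((1 - \<eta>) * \<psi>) y" unfolding \<psi>_def by (rule ax_quad[OF axy y0])
  have "lam x (m y (m y x) - sc \<eta> (m y x)) = (1 - \<eta>) * \<psi> * \<phi>" unfolding Q using \<phi>_def by (simp add: simps)
  moreover have "m y (m y x) = sc \<phi> (m y x) + sc \<eta> (m y ue)"
  proof -
    have "m y (m y x) = m y (sc \<phi> x + sc \<eta> ue)" using yx by (rule arg_cong)
    then show ?thesis by (simp add: madd2 msc2)
  qed
  ultimately have "\<phi> * \<phi> + \<eta> * \<kappa> - \<eta> * \<phi> = (1 - \<eta>) * \<psi> * \<phi>"
    using lyx lye by (simp add: simps lam_diff[OF axx x0])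
  moreover have k': "\<kappa> = \<phi> - \<phi> * \<phi>" using k by (simp add: algebra_simps)
  ultimately have "(1 - \<eta>) * (\<phi> * (\<phi> - \<psi>)) = 0" by (simp add: algebra_simps)
  then show ?thesis using eta1 unfolding \<phi>_def \<psi>_def by simp
qed

lemma lam_sym: assumes "ax x" "ax y" "x \<noteq> 0" "y \<noteq> 0" shows "lam x y = lam y x"
proof -
  have "lam x y * (lam x y - lam y x) = 0" "lam y x * (lam y x - lam x y) = 0" using L1 assms by auto
  then show ?thesis by (auto simp: right_diff_distrib)
qed

lemma auto_axis:
  assumes inv: "\<And>u. \<sigma> (\<sigma> u) = u" and sadd: "\<And>u v. \<sigma> (u + v) = \<sigma> u + \<sigma> v"
    and ssc: "\<And>c u. \<sigma> (sc c u) = sc c (\<sigma> u)" and smul: "\<And>u v. \<sigma> (m u v) = m (\<sigma> u) (\<sigma> v)"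
    and axy: "ax y"
  shows "ax (\<sigma> y)"
proof -
  have inj: "\<sigma> u = \<sigma> v \<longleftrightarrow> u = v" for u v by (metis inv)
  have Et: "u \<in> E (\<sigma> y) t \<longleftrightarrow> \<sigma> u \<in> E y t" for u t
  proof -
    have "u \<in> E (\<sigma> y) t \<longleftrightarrow> m u (\<sigma> y) = sc t u" by (simp add: eigsp_def)
    also have "\<dots> \<longleftrightarrow> \<sigma> (m u (\<sigma> y)) = \<sigma> (sc t u)" by (simp add: inj)
    also have "\<dots> \<longleftrightarrow> m (\<sigma> u) y = sc t (\<sigma> u)" by (simp add: smul ssc inv)
    finally show ?thesis by (simp add: eigsp_def)
  qed
  have Ap: "v \<in> Aplus sc m (\<sigma> y) \<longleftrightarrow> \<sigma> v \<in> Aplus sc m y" for v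
  proof
    assume "v \<in> Aplus sc m (\<sigma> y)"
    then obtain p q where "p \<in> E (\<sigma> y) 1" "q \<in> E (\<sigma> y) 0" "v = p + q" unfolding Aplus_def by blast
    then show "\<sigma> v \<in> Aplus sc m y" unfolding Aplus_def using Et sadd by blast
  next
    assume "\<sigma> v \<in> Aplus sc m y"
    then obtain p q where "p \<in> E y 1" "q \<in> E y 0" "\<sigma> v = p + q" unfolding Aplus_def by blast
    then have "\<sigma> p \<in> E (\<sigma> y) 1" "\<sigma> q \<in> E (\<sigma> y) 0" "v = \<sigma> p + \<sigma> q" using Et inv sadd by (metis)+
    then show "v \<in> Aplus sc m (\<sigma> y)" unfolding Aplus_def by blast
  qed
  have Am: "v \<in> Aminus sc m \<eta> (\<sigma> y) \<longleftrightarrow> \<sigma> v \<in> Aminus sc m \<eta> y" for v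
    unfolding Aminus_def using Et by blast
  have P: "prod_in m X Y Z" if "prod_in m X' Y' Z'" "\<And>v. v \<in> X \<longleftrightarrow> \<sigma> v \<in> X'" "\<And>v. v \<in> Y \<longleftrightarrow> \<sigma> v \<in> Y'"
     "\<And>v. v \<in> Z \<longleftrightarrow> \<sigma> v \<in> Z'" for X Y Z X' Y' Z'
    using that unfolding prod_in_def by (metis smul)
  have idem: "m (\<sigma> y) (\<sigma> y) = \<sigma> y" using ax_idem[OF axy] smul by metis
  have E1: "E (\<sigma> y) 1 = range (\<lambda>c. sc c (\<sigma> y))"
  proof (intro set_eqI iffI)
    fix u assume "u \<in> E (\<sigma> y) 1"
    then have "\<sigma> u \<in> E y 1" using Et by blast
    then obtain c where "\<sigma> u = sc c y" using ax_E1[OF axy] by auto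
    then have "u = sc c (\<sigma> y)" by (metis inv ssc)
    then show "u \<in> range (\<lambda>c. sc c (\<sigma> y))" by blast
  next
    fix u assume "u \<in> range (\<lambda>c. sc c (\<sigma> y))"
    then obtain c where "u = sc c (\<sigma> y)" by blast
    then have "\<sigma> u = sc c y" by (simp add: ssc inv)
    then show "u \<in> E (\<sigma> y) 1" using Et ax_E1[OF axy] by auto
  qed
  have EX: "\<exists>!t. fst t \<in> E (\<sigma> y) 1 \<and> fst (snd t) \<in> E (\<sigma> y) 0 \<and> snd (snd t) \<in> E (\<sigma> y) \<eta> \<and> x = fst t + fst (snd t) + snd (snd t)" for x
  proof -
    obtain t where t: "fst t \<in> E y 1 \<and> fst (snd t) \<in> E y 0 \<and> snd (snd t) \<in> E y \<eta> \<and> \<sigma> x = fst t + fst (snd t) + snd (snd t)"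
      and tu: "\<And>t'. fst t' \<in> E y 1 \<and> fst (snd t') \<in> E y 0 \<and> snd (snd t') \<in> E y \<eta> \<and> \<sigma> x = fst t' + fst (snd t') + snd (snd t') \<Longrightarrow> t' = t"
      using ax_ex1[OF axy, of "\<sigma> x"] by blast
    show ?thesis
    proof (rule ex1I[of _ "(\<sigma> (fst t), \<sigma> (fst (snd t)), \<sigma> (snd (snd t)))"])
      show "fst (\<sigma> (fst t), \<sigma> (fst (snd t)), \<sigma> (snd (snd t))) \<in> E (\<sigma> y) 1 \<and>
        fst (snd (\<sigma> (fst t), \<sigma> (fst (snd t)), \<sigma> (snd (snd t)))) \<in> E (\<sigma> y) 0 \<and>
        snd (snd (\<sigma> (fst t), \<sigma> (fst (snd t)), \<sigma> (snd (snd t)))) \<in> E (\<sigma> y) \<eta> \<and>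
        x = fst (\<sigma> (fst t), \<sigma> (fst (snd t)), \<sigma> (snd (snd t))) + fst (snd (\<sigma> (fst t), \<sigma> (fst (snd t)), \<sigma> (snd (snd t)))) +
            snd (snd (\<sigma> (fst t), \<sigma> (fst (snd t)), \<sigma> (snd (snd t))))"
        using t by (simp add: Et inv) (metis inv sadd)
    next
      fix t' assume h: "fst t' \<in> E (\<sigma> y) 1 \<and> fst (snd t') \<in> E (\<sigma> y) 0 \<and> snd (snd t') \<in> E (\<sigma> y) \<eta> \<and> x = fst t' + fst (snd t') + snd (snd t')"
      have "(\<sigma> (fst t'), \<sigma> (fst (snd t')), \<sigma> (snd (snd t'))) = t"
        apply (rule tu) using h by (simp add: Et sadd)
      then show "t' = (\<sigma> (fst t), \<sigma> (fst (snd t)), \<sigma> (snd (snd t)))" by (auto simp: inv)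
    qed
  qed
  have "prod_in m (Aplus sc m (\<sigma> y)) (Aplus sc m (\<sigma> y)) (Aplus sc m (\<sigma> y))"
    by (rule P[of "Aplus sc m y" "Aplus sc m y" "Aplus sc m y"]) (use axy Ap in \<open>auto simp: is_axis_def\<close>)
  moreover have "prod_in m (Aplus sc m (\<sigma> y)) (Aminus sc m \<eta> (\<sigma> y)) (Aminus sc m \<eta> (\<sigma> y))"
    by (rule P[of "Aplus sc m y" "Aminus sc m \<eta> y" "Aminus sc m \<eta> y"]) (use axy Ap Am in \<open>auto simp: is_axis_def\<close>)
  moreover have "prod_in m (Aminus sc m \<eta> (\<sigma> y)) (Aminus sc m \<eta> (\<sigma> y)) (Aplus sc m (\<sigma> y))"
    by (rule P[of "Aminus sc m \<eta> y" "Aminus sc m \<eta> y" "Aplus sc m y"]) (use axy Ap Am in \<open>auto simp: is_axis_def\<close>)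
  moreover have "prod_in m (E (\<sigma> y) 0) (E (\<sigma> y) 0) (E (\<sigma> y) 0)"
    by (rule P[of "E y 0" "E y 0" "E y 0"]) (use axy Et in \<open>auto simp: is_axis_def\<close>)
  ultimately show ?thesis unfolding is_axis_def using idem E1 EX by blast
qed

definition "tau x u = pr1 x u + pr0 x u - pre x u"

lemma tau_pm: assumes "ax x" "P \<in> Aplus sc m x" "N \<in> E x \<eta>" shows "tau x (P + N) = P - N"
proof -
  obtain p q where "p \<in> E x 1" "q \<in> E x 0" "P = p + q" using assms(2) unfolding Aplus_def by blast
  then show ?thesis using dec_eq[OF assms(1), of p q N "P + N"] assms(3) by (simp add: tau_def)
qed

lemma Aplus_dec: "ax x \<Longrightarrow> pr1 x u + pr0 x u \<in> Aplus sc m x"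
  unfolding Aplus_def using dec_props by blast

lemma tau_props: assumes axx: "ax x" and x0: "x \<noteq> 0"
  shows "tau x (tau x u) = u" "tau x (u + v) = tau x u + tau x v" "tau x (sc c u) = sc c (tau x u)"
    "tau x (m u v) = m (tau x u) (tau x v)"
proof -
  have pr1: "pr1 x u = sc (lam x u) x" for u using lam[OF axx x0] .
  have t: "tau x u = sc (lam x u) x + pr0 x u - pre x u" for u by (simp add: tau_def pr1)
  have "tau x (tau x u) = sc (lam x u) x + pr0 x u + pre x u"
  proof -
    have "tau x u = (sc (lam x u) x + pr0 x u) + (- pre x u)" by (simp add: t)
    then have "tau x (tau x u) = (sc (lam x u) x + pr0 x u) - (- pre x u)"
      using tau_pm[OF axx, of "sc (lam x u) x + pr0 x u" "- pre x u"] Aplus_dec[OF axx, of u] pr1 dec_props[OF axx] E_neg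
      by auto
    then show ?thesis by simp
  qed
  then show "tau x (tau x u) = u" using dec_lam[OF axx x0, of u] by simp
  show "tau x (u + v) = tau x u + tau x v" by (simp add: t axx x0 scale_left_distrib algebra_simps)
  show "tau x (sc c u) = sc c (tau x u)" by (simp add: t axx x0 scale_right_diff_distrib scale_right_distrib)
  define Pu Nu Pv Nv where "Pu = pr1 x u + pr0 x u" "Nu = pre x u" "Pv = pr1 x v + pr0 x v" "Nv = pre x v"
  have mem: "Pu \<in> Aplus sc m x" "Pv \<in> Aplus sc m x" "Nu \<in> E x \<eta>" "Nv \<in> E x \<eta>"
    unfolding Pu_Nu_Pv_Nv_def using Aplus_dec[OF axx] dec_props[OF axx] by auto
  have uu: "u = Pu + Nu" "v = Pv + Nv" unfolding Pu_Nu_Pv_Nv_def using dec_props(4)[OF axx] by (simp_all add: add.assoc)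
  have tu: "tau x u = Pu - Nu" "tau x v = Pv - Nv" using tau_pm[OF axx] mem uu by auto
  have f1: "m Pu Pv \<in> Aplus sc m x" "m Nu Nv \<in> Aplus sc m x" "m Pu Nv \<in> E x \<eta>" "m Nu Pv \<in> E x \<eta>"
    using axx mem unfolding is_axis_def prod_in_def Aminus_def by (auto simp: mcomm[of Nu Pv])
  have ApA: "a \<in> Aplus sc m x \<Longrightarrow> b \<in> Aplus sc m x \<Longrightarrow> a + b \<in> Aplus sc m x" for a b
  proof -
    assume "a \<in> Aplus sc m x" "b \<in> Aplus sc m x"
    then obtain p q p' q' where "p \<in> E x 1" "q \<in> E x 0" "a = p + q" "p' \<in> E x 1" "q' \<in> E x 0" "b = p' + q'" unfolding Aplus_def by blast
    then show ?thesis unfolding Aplus_def by (intro CollectI exI[of _ "p + p'"] exI[of _ "q + q'"]) (auto simp: E_add algebra_simps)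
  qed
  have "m u v = (m Pu Pv + m Nu Nv) + (m Pu Nv + m Nu Pv)" unfolding uu by (simp add: madd1 madd2 algebra_simps)
  then have "tau x (m u v) = (m Pu Pv + m Nu Nv) - (m Pu Nv + m Nu Pv)"
    using tau_pm[OF axx] f1 ApA E_add by simp
  also have "\<dots> = m (tau x u) (tau x v)" unfolding tu by (simp add: mdiff1 mdiff2 algebra_simps)
  finally show "tau x (m u v) = m (tau x u) (tau x v)" .
qed

lemma tau_axis: "ax x \<Longrightarrow> x \<noteq> 0 \<Longrightarrow> ax y \<Longrightarrow> ax (tau x y)"
  by (rule auto_axis[of "tau x"]) (auto simp: tau_props)

lemma miy: "ax x \<Longrightarrow> miyamoto sc m \<eta> x = tau x"
  by (rule ext) (simp add: tau_eq tau_def)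

lemma two_sc: "(v::'v) + v = sc 2 v"
  by (metis one_add_one scale_left_distrib scale_one)
lemma dbl0: fixes v :: 'v assumes "v + v = 0" shows "v = 0"
proof -
  have "sc 2 v = 0" using assms by (simp only: two_sc)
  then show ?thesis using two by simp
qed

lemma pre_pm: assumes "ax x" "P \<in> Aplus sc m x" "N \<in> E x \<eta>" shows "pre x (P + N) = N"
proof -
  obtain p q where "p \<in> E x 1" "q \<in> E x 0" "P = p + q" using assms(2) unfolding Aplus_def by blast
  then show ?thesis using dec_eq[OF assms(1), of p q N "P + N"] assms(3) by simp
qed

lemma grp1: assumes "(p::'v) - n = p + n" shows "n + n = 0"
proof -
  from assms have "p + (-n) = p + n" by (simp only: diff_conv_add_uminus)
  then have "-n = n" by (simp only: add_left_cancel)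
  then show ?thesis by (simp only: neg_eq_iff_add_eq_0)
qed
lemma grp2: assumes "(p::'v) - n = - (p + n)" shows "p + p = 0"
proof -
  from assms have "p + (-n) = - p + (- n)" by (simp only: diff_conv_add_uminus minus_add_distrib)
  then have "p = - p" by (simp only: add_right_cancel)
  then have "- p = p" by (rule sym)
  then show ?thesis by (simp only: neg_eq_iff_add_eq_0)
qed

lemma grp3: "(u::'v) = x + p + w \<Longrightarrow> u - x - y - w = p - y" by (simp add: algebra_simps)
lemma grp4: "(u::'v) = y + p + w \<Longrightarrow> u - x - y - w = p - x" by (simp add: algebra_simps)

lemma half: assumes "(v::'v) + v = u" shows "v = sc (1/2) u"
proof -
  have "sc 2 v = u" using assms two_sc by simp
  then have "sc (1/2) (sc 2 v) = sc (1/2) u" by simp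
  then show ?thesis using two by simp
qed

lemma hh: "(1::'f)/2 + 1/2 = 1" using two by (simp add: field_simps)

lemma hv: "sc (1/2) v + sc (1/2) v = v"
  by (metis hh scale_left_distrib scale_one)

lemma tau_fix: assumes "ax x" shows "tau x u = u \<longleftrightarrow> u \<in> Aplus sc m x"
proof
  assume h: "tau x u = u"
  have "pr1 x u + pr0 x u - pre x u = tau x u" by (simp add: tau_def)
  also have "\<dots> = u" by (rule h)
  also have "\<dots> = pr1 x u + pr0 x u + pre x u" by (rule dec_props(4)[OF assms])
  finally have "pre x u + pre x u = 0" by (rule grp1)
  then have "pre x u = 0" by (rule dbl0)
  then show "u \<in> Aplus sc m x" using dec_props[OF assms, of u] unfolding Aplus_def by force
next
  assume "u \<in> Aplus sc m x"
  then show "tau x u = u" using tau_pm[OF assms, of u 0] E_0 by simp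
qed

lemma tau_neg: assumes "ax x" shows "tau x u = - u \<longleftrightarrow> u \<in> E x \<eta>"
proof
  assume h: "tau x u = - u"
  have "pr1 x u + pr0 x u - pre x u = tau x u" by (simp add: tau_def)
  also have "\<dots> = - u" by (rule h)
  also have "\<dots> = - ((pr1 x u + pr0 x u) + pre x u)" using dec_props(4)[OF assms] by (rule arg_cong)
  finally have "(pr1 x u + pr0 x u) + (pr1 x u + pr0 x u) = 0" by (rule grp2)
  then have z: "pr1 x u + pr0 x u = 0" by (rule dbl0)
  have "u = (pr1 x u + pr0 x u) + pre x u" using dec_props(4)[OF assms, of u] by simp
  then show "u \<in> E x \<eta>" using dec_props(3)[OF assms, of u] z by simp
next
  assume "u \<in> E x \<eta>"
  then show "tau x u = - u" using tau_pm[OF assms, of 0 u] E_0 unfolding Aplus_def by force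
qed

end

locale AB = AX +
  fixes a b
  assumes axa: "ax a" and axb: "ax b" and ab: "a \<noteq> b" and tt: "tau a = tau b" and tnid: "tau a \<noteq> id"
begin

lemma tau_id0: assumes "ax x" "x = 0" shows "tau x = id"
proof
  fix u
  have "pre x u = 0" using dec_props(3)[OF assms(1), of u] assms(2) eta0 by (simp add: memE m01)
  then have "tau x u = pr1 x u + pr0 x u + pre x u" by (simp add: tau_def)
  also have "\<dots> = u" by (rule dec_props(4)[OF assms(1), symmetric])
  finally show "tau x u = id u" by simp
qed

lemma a0: "a \<noteq> 0"
proof
  assume "a = 0" then have "tau a = id" by (rule tau_id0[OF axa])
  then show False using tnid by simp
qed
lemma b0: "b \<noteq> 0"
proof
  assume "b = 0" then have "tau b = id" by (rule tau_id0[OF axb])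
  then show False using tnid tt by simp
qed

lemma Ap_eq: "Aplus sc m a = Aplus sc m b" by (rule set_eqI) (simp only: tau_fix[OF axa, symmetric] tau_fix[OF axb, symmetric] tt)
lemma Ee_eq: "E a \<eta> = E b \<eta>" by (rule set_eqI) (simp only: tau_neg[OF axa, symmetric] tau_neg[OF axb, symmetric] tt)

lemma ab0: "m a b = 0"
proof -
  have "b \<in> Aplus sc m b" unfolding Aplus_def using scE1[OF axb, of 1] E_0[of b 0] by force
  then have "b \<in> Aplus sc m a" using Ap_eq by simp
  then have pe: "pre a b = 0" using pre_pm[OF axa, of b 0] E_0 by simp
  define l where "l = lam a b"
  define b1 where "b1 = pr0 a b"
  have "b = sc l a + b1 + pre a b" unfolding l_def b1_def by (rule dec_lam[OF axa a0])
  then have hb: "b = sc l a + b1" by (simp only: pe add_0_right)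
  have b1E: "b1 \<in> E a 0" unfolding b1_def using dec_props[OF axa] by auto
  have mab1: "m a b1 = 0" "m b1 a = 0" using b1E by (auto simp: memE mcomm[of b1 a])
  have "lam a (m b b) = l" using ax_idem[OF axb] l_def by simp
  moreover have "m b b = m (sc l a + b1) (sc l a + b1)" using hb by simp
  ultimately have "l = l * l"
    using on_E0[OF axa a0 f00[OF axa b1E b1E]] on_E0[OF axa a0 b1E]
    by (simp add: madd1 madd2 msc1 msc2 mab1 ax_idem[OF axa] lam_add[OF axa a0] lam_sc[OF axa a0] lam_self[OF axa a0] m01 m02)
  then have "l * (l - 1) = 0" by (simp add: right_diff_distrib)
  then have "l = 0 \<or> l = 1" by simp
  moreover have "l \<noteq> 1"
  proof
    assume l1: "l = 1"
    have "m a b = m a (sc l a + b1)" using hb by (rule arg_cong)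
    also have "\<dots> = sc l a" by (simp add: madd2 msc2 ax_idem[OF axa] mab1)
    finally have "m a b = a" using l1 by simp
    then have "a \<in> E b 1" by (simp add: memE mcomm[of b a])
    then obtain c where c: "a = sc c b" using ax_E1[OF axb] by auto
    have "m a a = sc (c * c) b" using c by (simp add: msc1 msc2 ax_idem[OF axb])
    then have "sc c b = sc (c * c) b" using ax_idem[OF axa] c by simp
    then have "c = c * c" using b0 by simp
    then have "c * (c - 1) = 0" by (simp add: right_diff_distrib)
    then have "c = 0 \<or> c = 1" by simp
    then show False using c a0 ab by auto
  qed
  ultimately have "b = b1" using hb by simp
  then show ?thesis using b1E by (simp add: memE)
qed
lemma ba0: "m b a = 0" by (subst mcomm) (rule ab0)
lemma bEa: "b \<in> E a 0" using ab0 by (simp add: memE)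
lemma aEb: "a \<in> E b 0" using ba0 by (simp add: memE)

definition "W = E a \<eta>"
definition "Z = E a 0 \<inter> E b 0"
definition "cA u = lam a u"
definition "cB u = lam b u"
definition "cW u = pre a u"
definition "cZ u = u - sc (cA u) a - sc (cB u) b - cW u"

lemma W_a: "w \<in> W \<Longrightarrow> w \<in> E a \<eta>" and W_b: "w \<in> W \<Longrightarrow> w \<in> E b \<eta>" using Ee_eq by (auto simp: W_def)
lemma Z_a: "z \<in> Z \<Longrightarrow> z \<in> E a 0" and Z_b: "z \<in> Z \<Longrightarrow> z \<in> E b 0" by (auto simp: Z_def)

lemma W_cl[simp]: "0 \<in> W" "u \<in> W \<Longrightarrow> v \<in> W \<Longrightarrow> u + v \<in> W" "u \<in> W \<Longrightarrow> sc c u \<in> W"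
  "u \<in> W \<Longrightarrow> - u \<in> W" "u \<in> W \<Longrightarrow> v \<in> W \<Longrightarrow> u - v \<in> W"
  by (auto simp: W_def E_0 E_add E_sc E_neg E_diff)
lemma Z_cl[simp]: "0 \<in> Z" "u \<in> Z \<Longrightarrow> v \<in> Z \<Longrightarrow> u + v \<in> Z" "u \<in> Z \<Longrightarrow> sc c u \<in> Z"
  "u \<in> Z \<Longrightarrow> - u \<in> Z" "u \<in> Z \<Longrightarrow> v \<in> Z \<Longrightarrow> u - v \<in> Z"
  by (auto simp: Z_def E_0 E_add E_sc E_neg E_diff)

lemma mult_rules[simp]:
  "m a a = a" "m b b = b" "m a b = 0" "m b a = 0"
  "z \<in> Z \<Longrightarrow> m a z = 0" "z \<in> Z \<Longrightarrow> m z a = 0" "z \<in> Z \<Longrightarrow> m b z = 0" "z \<in> Z \<Longrightarrow> m z b = 0"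
  "w \<in> W \<Longrightarrow> m a w = sc \<eta> w" "w \<in> W \<Longrightarrow> m w a = sc \<eta> w" "w \<in> W \<Longrightarrow> m b w = sc \<eta> w" "w \<in> W \<Longrightarrow> m w b = sc \<eta> w"
  using ax_idem[OF axa] ax_idem[OF axb] ab0 ba0
  by (auto simp: memE dest: Z_a Z_b W_a W_b) (metis memE mcomm Z_a Z_b W_a W_b scale_zero_left)+

lemma prod_mem[simp]: "z \<in> Z \<Longrightarrow> z' \<in> Z \<Longrightarrow> m z z' \<in> Z" "z \<in> Z \<Longrightarrow> w \<in> W \<Longrightarrow> m z w \<in> W"
  "z \<in> Z \<Longrightarrow> w \<in> W \<Longrightarrow> m w z \<in> W"
  by (auto simp: Z_def W_def intro: f00[OF axa] f00[OF axb] f0e[OF axa] fe0[OF axa])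

lemma pre_b: "pre b u = pre a u"
proof -
  have "u = (pr1 a u + pr0 a u) + pre a u" using dec_props(4)[OF axa, of u] by (simp add: add.assoc)
  moreover have "pr1 a u + pr0 a u \<in> Aplus sc m b" using Aplus_dec[OF axa, of u] Ap_eq by simp
  moreover have "pre a u \<in> E b \<eta>" using dec_props(3)[OF axa, of u] Ee_eq by simp
  ultimately show ?thesis using pre_pm[OF axb] by metis
qed


lemma cZ_mem: "cZ u \<in> Z"
proof -
  have h1: "cZ u = pr0 a u - sc (cB u) b" unfolding cZ_def cA_def cW_def by (rule grp3[OF dec_lam[OF axa a0]])
  have h2: "cZ u = pr0 b u - sc (cA u) a" unfolding cZ_def cB_def cW_def pre_b[symmetric] by (rule grp4[OF dec_lam[OF axb b0]])
  have "cZ u \<in> E a 0" unfolding h1 by (intro E_diff E_sc dec_props(2)[OF axa] bEa)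
  moreover have "cZ u \<in> E b 0" unfolding h2 by (intro E_diff E_sc dec_props(2)[OF axb] aEb)
  ultimately show ?thesis unfolding Z_def by blast
qed

lemma coord_dec: "u = sc (cA u) a + sc (cB u) b + cZ u + cW u" by (simp add: cZ_def)

lemma coord_eq: assumes "u = sc \<alpha> a + sc \<beta> b + z + w" "z \<in> Z" "w \<in> W"
  shows "cA u = \<alpha>" "cB u = \<beta>" "cW u = w" "cZ u = z"
proof -
  have 1: "u = sc \<alpha> a + (sc \<beta> b + z) + w" using assms(1) by (simp add: add.assoc)
  have 2: "sc \<beta> b + z \<in> E a 0" using assms(2) bEa by (auto simp: Z_def intro!: E_add E_sc)
  show A: "cA u = \<alpha>" "cW u = w" unfolding cA_def cW_def using lam_eq[OF axa a0 2 W_a[OF assms(3)] 1] by auto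
  have 3: "u = sc \<beta> b + (sc \<alpha> a + z) + w" using assms(1) by (simp add: algebra_simps)
  have 4: "sc \<alpha> a + z \<in> E b 0" using assms(2) aEb by (auto simp: Z_def intro!: E_add E_sc)
  show B: "cB u = \<beta>" unfolding cB_def using lam_eq[OF axb b0 4 W_b[OF assms(3)] 3] by auto
  show "cZ u = z" unfolding cZ_def A B using assms(1) by (simp add: algebra_simps)
qed

lemma coord_lin[simp]:
  "cA (u + v) = cA u + cA v" "cB (u + v) = cB u + cB v" "cW (u + v) = cW u + cW v" "cZ (u + v) = cZ u + cZ v"
  "cA (sc c u) = c * cA u" "cB (sc c u) = c * cB u" "cW (sc c u) = sc c (cW u)" "cZ (sc c u) = sc c (cZ u)"
  "cA (- u) = - cA u" "cB (- u) = - cB u" "cW (- u) = - cW u" "cZ (- u) = - cZ u"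
  "cA (u - v) = cA u - cA v" "cB (u - v) = cB u - cB v" "cW (u - v) = cW u - cW v" "cZ (u - v) = cZ u - cZ v"
  "cA 0 = 0" "cB 0 = 0" "cW 0 = 0" "cZ 0 = 0"
  by (simp_all add: cA_def cB_def cW_def cZ_def axa axb a0 b0 algebra_simps scale_left_distrib scale_right_distrib
      scale_right_diff_distrib scale_left_diff_distrib)

lemma coord_basic[simp]:
  "cA a = 1" "cB a = 0" "cW a = 0" "cZ a = 0" "cA b = 0" "cB b = 1" "cW b = 0" "cZ b = 0"
  using coord_eq[of a 1 0 0 0] coord_eq[of b 0 1 0 0] by simp_all

lemma coord_Z[simp]: assumes "z \<in> Z" shows "cA z = 0" "cB z = 0" "cW z = 0" "cZ z = z"
  using coord_eq[of z 0 0 z 0] assms by simp_all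
lemma coord_W[simp]: assumes "w \<in> W" shows "cA w = 0" "cB w = 0" "cW w = w" "cZ w = 0"
  using coord_eq[of w 0 0 0 w] assms by simp_all

lemma cW_ww[simp]: "w \<in> W \<Longrightarrow> w' \<in> W \<Longrightarrow> cW (m w w') = 0"
  unfolding cW_def using fee[OF axa] W_a by blast

lemma coord_inj: "cA u = cA v \<Longrightarrow> cB u = cB v \<Longrightarrow> cZ u = cZ v \<Longrightarrow> cW u = cW v \<Longrightarrow> u = v"
  by (metis coord_dec)

lemma cW_mem[simp]: "cW u \<in> W" unfolding cW_def W_def using dec_props(3)[OF axa] .

lemma axis_eqs: assumes axy: "ax y" and y0: "y \<noteq> 0"
  defines "\<alpha> \<equiv> cA y" and "\<beta> \<equiv> cB y" and "z \<equiv> cZ y" and "w \<equiv> cW y"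
  shows "\<alpha> * \<alpha> + cA (m w w) = \<alpha>" "\<beta> * \<beta> + cB (m w w) = \<beta>" "m z z + cZ (m w w) = z"
    "m z w = sc (1/2 - (\<alpha> + \<beta>) * \<eta>) w" "m w z = sc (1/2 - (\<alpha> + \<beta>) * \<eta>) w"
    "\<eta> * cB (m w w) = (1 - \<eta>) * \<alpha> * \<beta>" "\<eta> * cA (m w w) = (1 - \<eta>) * \<beta> * \<alpha>"
    "sc \<eta> (cZ (m w w)) = sc ((1 - \<eta>) * \<alpha>) z" "sc \<eta> (cZ (m w w)) = sc ((1 - \<eta>) * \<beta>) z"
    "w \<noteq> 0 \<Longrightarrow> \<alpha> * \<eta> + \<eta> / 2 - \<eta> * \<eta> = (1 - \<eta>) * \<alpha>"
    "w \<noteq> 0 \<Longrightarrow> \<beta> * \<eta> + \<eta> / 2 - \<eta> * \<eta> = (1 - \<eta>) * \<beta>"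
proof -
  have hy: "y = sc \<alpha> a + sc \<beta> b + z + w" unfolding assms by (rule coord_dec)
  have zZ: "z \<in> Z" and wW: "w \<in> W" unfolding assms by (simp_all add: cZ_mem)
  note simps = zZ wW mult_rules coord_lin coord_Z coord_W coord_basic prod_mem madd1 madd2 msc1 msc2
  have yy: "m y y = m (sc \<alpha> a + sc \<beta> b + z + w) (sc \<alpha> a + sc \<beta> b + z + w)" using hy by simp
  have 1: "cA (m y y) = \<alpha>" "cB (m y y) = \<beta>" "cZ (m y y) = z" "cW (m y y) = w" using ax_idem[OF axy] assms by simp_all
  show Y: "\<alpha> * \<alpha> + cA (m w w) = \<alpha>" "\<beta> * \<beta> + cB (m w w) = \<beta>" "m z z + cZ (m w w) = z"
    using 1(1-3) unfolding yy by (simp_all add: simps)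
  have mwz: "m w z = m z w" by (rule mcomm)
  have "(sc (\<alpha> * \<eta>) w + sc (\<beta> * \<eta>) w + m z w) + (sc (\<alpha> * \<eta>) w + sc (\<beta> * \<eta>) w + m z w) = w"
    using 1(4) unfolding yy by (simp add: simps mwz algebra_simps)
  then have "sc (\<alpha> * \<eta>) w + sc (\<beta> * \<eta>) w + m z w = sc (1/2) w" by (rule half)
  then have "m z w = sc (1/2) w - sc (\<alpha> * \<eta>) w - sc (\<beta> * \<eta>) w" by (simp add: algebra_simps)
  then show ZW: "m z w = sc (1/2 - (\<alpha> + \<beta>) * \<eta>) w" "m w z = sc (1/2 - (\<alpha> + \<beta>) * \<eta>) w"
    by (simp_all add: mwz algebra_simps scale_left_diff_distrib scale_left_distrib)
  have lsym: "lam y a = \<alpha>" "lam y b = \<beta>" unfolding assms cA_def cB_def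
    using lam_sym[OF axy axa y0 a0] lam_sym[OF axy axb y0 b0] by simp_all
  have Qa: "m y (m y a) - sc \<eta> (m y a) = sc ((1 - \<eta>) * \<alpha>) y" using ax_quad[OF axy y0, of a] lsym by simp
  have Qb: "m y (m y b) - sc \<eta> (m y b) = sc ((1 - \<eta>) * \<beta>) y" using ax_quad[OF axy y0, of b] lsym by simp
  have ya: "m y a = sc \<alpha> a + sc \<eta> w" unfolding hy by (simp add: simps)
  have yb: "m y b = sc \<beta> b + sc \<eta> w" unfolding hy by (simp add: simps)
  have yw: "m y w = sc ((\<alpha> + \<beta>) * \<eta>) w + m z w + m w w" unfolding hy by (simp add: simps scale_left_distrib distrib_right)
  have yya: "m y (m y a) = sc \<alpha> (m y a) + sc \<eta> (m y w)"
  proof -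
    have "m y (m y a) = m y (sc \<alpha> a + sc \<eta> w)" using ya by (rule arg_cong)
    then show ?thesis using ya by (simp add: madd2 msc2)
  qed
  have yyb: "m y (m y b) = sc \<beta> (m y b) + sc \<eta> (m y w)"
  proof -
    have "m y (m y b) = m y (sc \<beta> b + sc \<eta> w)" using yb by (rule arg_cong)
    then show ?thesis using yb by (simp add: madd2 msc2)
  qed
  have Qa': "sc \<alpha> (sc \<alpha> a + sc \<eta> w) + sc \<eta> (sc ((\<alpha> + \<beta>) * \<eta>) w + sc (1/2 - (\<alpha> + \<beta>) * \<eta>) w + m w w) - sc \<eta> (sc \<alpha> a + sc \<eta> w)
     = sc ((1 - \<eta>) * \<alpha>) (sc \<alpha> a + sc \<beta> b + z + w)"
    using Qa unfolding yya unfolding ya yw ZW(1) by (simp only: hy[symmetric])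
  have Qb': "sc \<beta> (sc \<beta> b + sc \<eta> w) + sc \<eta> (sc ((\<alpha> + \<beta>) * \<eta>) w + sc (1/2 - (\<alpha> + \<beta>) * \<eta>) w + m w w) - sc \<eta> (sc \<beta> b + sc \<eta> w)
     = sc ((1 - \<eta>) * \<beta>) (sc \<alpha> a + sc \<beta> b + z + w)"
    using Qb unfolding yyb unfolding yb yw ZW(1) by (simp only: hy[symmetric])
  show "\<eta> * cB (m w w) = (1 - \<eta>) * \<alpha> * \<beta>" using arg_cong[OF Qa', of cB] by (simp add: simps)
  show "\<eta> * cA (m w w) = (1 - \<eta>) * \<beta> * \<alpha>" using arg_cong[OF Qb', of cA] by (simp add: simps)
  show "sc \<eta> (cZ (m w w)) = sc ((1 - \<eta>) * \<alpha>) z" using arg_cong[OF Qa', of cZ] by (simp add: simps)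
  show "sc \<eta> (cZ (m w w)) = sc ((1 - \<eta>) * \<beta>) z" using arg_cong[OF Qb', of cZ] by (simp add: simps)
  have WA0: "sc (\<alpha> * \<eta>) w + sc (\<eta> / 2) w - sc (\<eta> * \<eta>) w = sc ((1 - \<eta>) * \<alpha>) w"
    using arg_cong[OF Qa', of cW] by (simp add: simps scale_left_distrib scale_left_diff_distrib)
  have WB0: "sc (\<beta> * \<eta>) w + sc (\<eta> / 2) w - sc (\<eta> * \<eta>) w = sc ((1 - \<eta>) * \<beta>) w"
    using arg_cong[OF Qb', of cW] by (simp add: simps scale_left_distrib scale_left_diff_distrib)
  have WA: "sc (\<alpha> * \<eta> + \<eta> / 2 - \<eta> * \<eta>) w = sc ((1 - \<eta>) * \<alpha>) w"
    using WA0 by (simp add: scale_left_distrib scale_left_diff_distrib)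
  then show "w \<noteq> 0 \<Longrightarrow> \<alpha> * \<eta> + \<eta> / 2 - \<eta> * \<eta> = (1 - \<eta>) * \<alpha>" by simp
  have WB: "sc (\<beta> * \<eta> + \<eta> / 2 - \<eta> * \<eta>) w = sc ((1 - \<eta>) * \<beta>) w"
    using WB0 by (simp add: scale_left_distrib scale_left_diff_distrib)
  then show "w \<noteq> 0 \<Longrightarrow> \<beta> * \<eta> + \<eta> / 2 - \<eta> * \<eta> = (1 - \<eta>) * \<beta>" by simp
qed

lemma coords_of: assumes "y = sc \<alpha> a + sc \<beta> b + z + w" "z \<in> Z" "w \<in> W"
  shows "cA y = \<alpha>" "cB y = \<beta>" "cZ y = z" "cW y = w" using coord_eq[OF assms] by auto

lemma ma_dec: "m a y = sc (cA y) a + sc \<eta> (cW y)"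
proof -
  have "m a y = m a (sc (cA y) a + sc (cB y) b + cZ y + cW y)" by (subst coord_dec[of y]) (rule refl)
  then show ?thesis by (simp add: madd2 msc2 cZ_mem)
qed

lemma eta_half: assumes axc: "ax c" and c0: "c \<noteq> 0" and ac: "m a c \<noteq> 0" and ca: "c \<noteq> a"
  shows "\<eta> = 1/2"
proof -
  define \<alpha> \<beta> z w where "\<alpha> = cA c" "\<beta> = cB c" "z = cZ c" "w = cW c"
  note eqs = axis_eqs[OF axc c0, folded \<alpha>_\<beta>_z_w_def]
  have hc: "c = sc \<alpha> a + sc \<beta> b + z + w" unfolding \<alpha>_\<beta>_z_w_def by (rule coord_dec)
  show ?thesis
  proof (cases "w = 0")
    case True
    have "m a c = sc \<alpha> a" using ma_dec[of c] True \<alpha>_\<beta>_z_w_def by simp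
    then have "\<alpha> \<noteq> 0" using ac by auto
    have "\<alpha> * \<alpha> = \<alpha>" using eqs(1) True by (simp add: m01)
    then have a1: "\<alpha> = 1" using \<open>\<alpha> \<noteq> 0\<close> by (metis mult_cancel_right1)
    have "(1 - \<eta>) * \<beta> = 0" using eqs(6) True a1 by (simp add: m01)
    then have b1: "\<beta> = 0" using eta1 by simp
    have "sc ((1 - \<eta>) * \<alpha>) z = 0" using eqs(8) True by (simp add: m01)
    then have "z = 0" using eta1 a1 by simp
    then have "c = a" using hc a1 b1 True by simp
    then show ?thesis using ca by simp
  next
    case False
    show ?thesis
    proof (rule ccontr)
      assume ne: "\<eta> \<noteq> 1/2"
      then have ne': "1 - 2 * \<eta> \<noteq> 0" using two by (auto simp: field_simps)
      note h = hh
      have a2: "\<alpha> = \<eta> * (1/2)" by (rule S1[OF h _ ne']) (use eqs(10)[OF False] in simp)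
      have b2: "\<beta> = \<eta> * (1/2)" by (rule S1[OF h _ ne']) (use eqs(11)[OF False] in simp)
      have "cA (m w w) = \<alpha> - \<alpha> * \<alpha>" using eqs(1) by (simp add: algebra_simps)
      then have "\<eta> * (\<alpha> - \<alpha> * \<alpha>) = (1 - \<eta>) * \<beta> * \<alpha>" using eqs(7) by simp
      then show False using S2[OF h _ a2 b2 eta0] by blast
    qed
  qed
qed

lemma my_a: "m y a = sc (cA y) a + sc \<eta> (cW y)" using ma_dec[of y] mcomm[of y a] by simp
lemma mb_dec: "m b y = sc (cB y) b + sc \<eta> (cW y)"
proof -
  have "m b y = m b (sc (cA y) a + sc (cB y) b + cZ y + cW y)" by (subst coord_dec[of y]) (rule refl)
  then show ?thesis by (simp add: madd2 msc2 cZ_mem)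
qed
lemma my_b: "m y b = sc (cB y) b + sc \<eta> (cW y)" using mb_dec[of y] mcomm[of y b] by simp

lemma UZ: assumes axy: "ax y" and y0: "y \<noteq> 0" and eh: "\<eta> = 1/2"
  shows "cZ y = 0 \<or> (cA y = 0 \<and> cB y = 0 \<and> cW y = 0)"
proof -
  have ehh: "\<eta> + \<eta> = 1" unfolding eh by (rule hh)
  have hve: "sc \<eta> v + sc \<eta> v = v" for v unfolding eh by (rule hv)
  define \<alpha> \<beta> z w where "\<alpha> = cA y" "\<beta> = cB y" "z = cZ y" "w = cW y"
  note eqs = axis_eqs[OF axy y0, folded \<alpha>_\<beta>_z_w_def]
  have hy: "y = sc \<alpha> a + sc \<beta> b + z + w" unfolding \<alpha>_\<beta>_z_w_def by (rule coord_dec)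
  have zZ: "z \<in> Z" and wW: "w \<in> W" unfolding \<alpha>_\<beta>_z_w_def by (simp_all add: cZ_mem)
  note simps = zZ wW mult_rules coord_lin coord_Z coord_W coord_basic prod_mem madd1 madd2 msc1 msc2
  have ya: "m y a = sc \<alpha> a + sc \<eta> w" and yb: "m y b = sc \<beta> b + sc \<eta> w" unfolding \<alpha>_\<beta>_z_w_def by (rule my_a, rule my_b)
  show ?thesis unfolding \<alpha>_\<beta>_z_w_def[symmetric]
  proof (rule ccontr)
    assume "\<not> (z = 0 \<or> (\<alpha> = 0 \<and> \<beta> = 0 \<and> w = 0))"
    then have z0: "z \<noteq> 0" and nt: "\<not> (\<alpha> = 0 \<and> \<beta> = 0 \<and> w = 0)" by auto
    have "sc ((1 - \<eta>) * \<alpha>) z = sc ((1 - \<eta>) * \<beta>) z" using eqs(8) eqs(9) by (rule subst)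
    then have "(1 - \<eta>) * \<alpha> = (1 - \<eta>) * \<beta>" using z0 by simp
    then have ab: "\<alpha> = \<beta>" using eta1 by simp
    have cAw: "cA (m w w) = \<alpha> - \<alpha> * \<alpha>" using eqs(1) by (simp add: algebra_simps)
    have cBw: "cB (m w w) = \<beta> - \<beta> * \<beta>" using eqs(2) by (simp add: algebra_simps)
    have "\<eta> * (\<alpha> - \<alpha> * \<alpha>) = (1 - \<eta>) * \<alpha> * \<alpha>" using eqs(7) cAw ab by simp
    then have "\<eta> * \<alpha> - \<eta> * (\<alpha> * \<alpha>) = \<alpha> * \<alpha> - \<eta> * (\<alpha> * \<alpha>)" by (simp add: algebra_simps)
    then have "\<alpha> = 0 \<or> \<eta> = \<alpha>" by (simp add: algebra_simps)
    then show False
    proof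
      assume a0': "\<alpha> = 0"
      then have b0': "\<beta> = 0" using ab by simp
      have A0: "cA (m w w) = 0" "cB (m w w) = 0" using cAw cBw a0' b0' by simp_all
      have "sc \<eta> (cZ (m w w)) = 0" using eqs(8) a0' by simp
      then have Z0: "cZ (m w w) = 0" using eta0 by simp
      have ww0: "m w w = 0" by (rule coord_inj) (use A0 Z0 wW in simp_all)
      have zw: "m z w = sc \<eta> w" using eqs(4) a0' b0' eh by simp
      have hy': "y = z + w" using hy a0' b0' by simp
      have yw: "m y w = sc \<eta> w" unfolding hy' using zw ww0 by (simp add: madd1)
      have "a - w \<in> E y 0" unfolding memE using ya yw a0' by (simp add: mdiff2)
      moreover have "b - w \<in> E y 0" unfolding memE using yb yw b0' by (simp add: mdiff2)
      ultimately have "m (a - w) (b - w) \<in> E y 0" by (rule f00[OF axy])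
      moreover have "m (a - w) (b - w) = - w"
      proof -
        have "m (a - w) (b - w) = - (sc \<eta> w + sc \<eta> w)" using wW ww0 by (simp add: mdiff1 mdiff2 algebra_simps)
        then show ?thesis by (simp only: hve)
      qed
      ultimately have "m y w = 0" unfolding memE by (simp add: mneg2)
      then have "w = 0" using yw eta0 by simp
      then show False using nt a0' b0' by simp
    next
      assume "\<eta> = \<alpha>"
      then have a2: "\<alpha> = \<eta>" by simp
      then have b2: "\<beta> = \<eta>" using ab by simp
      have w0: "w \<noteq> 0"
      proof
        assume "w = 0"
        then have "\<alpha> - \<alpha> * \<alpha> = 0" using cAw by (simp add: m01)
        then have "\<eta> * (1 - \<eta>) = 0" using a2 by (simp add: algebra_simps)
        then show False using eta0 eta1 by simp
      qed
      have "(\<alpha> + \<beta>) * \<eta> = \<eta>" using a2 b2 ehh by simp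
      then have "1/2 - (\<alpha> + \<beta>) * \<eta> = 0" by (simp add: eh[symmetric])
      then have zw: "m z w = 0" "m w z = 0" using eqs(4,5) by simp_all
      have omh: "1 - \<eta> = \<eta>" using ehh by (metis add_diff_cancel_right')
      have "sc \<eta> (cZ (m w w)) = sc (\<eta> * \<eta>) z" using eqs(8) a2 omh by simp
      then have "sc \<eta> (cZ (m w w)) = sc \<eta> (sc \<eta> z)" by simp
      then have cZw: "cZ (m w w) = sc \<eta> z" by (rule scale_left_imp_eq[OF eta0])
      have "m z z + sc \<eta> z = z" using eqs(3) by (simp only: cZw)
      also have "\<dots> = sc \<eta> z + sc \<eta> z" by (rule hve[symmetric])
      finally have zz: "m z z = sc \<eta> z" by (simp only: add_right_cancel)
      have yz: "m y z = sc \<eta> z" unfolding hy using zz zw by (simp add: simps)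
      then have zE: "z \<in> E y \<eta>" by (simp add: memE)
      then have "m z z \<in> E y \<eta>" unfolding zz by (rule E_sc)
      then have "pre y (m z z) = m z z" using on_Ee[OF axy y0] by blast
      moreover have "pre y (m z z) = 0" by (rule fee[OF axy zE zE])
      ultimately have "sc \<eta> z = 0" using zz by simp
      then show False using z0 eta0 by simp
    qed
  qed
qed

lemma K: assumes eh: "\<eta> = 1/2" and axx: "ax x" and x0: "x \<noteq> 0" and xz: "cZ x = 0"
  and axy: "ax y" and y0: "y \<noteq> 0" and yZ: "y \<in> Z"
  shows "m x y = 0"
proof -
  have ehh: "\<eta> + \<eta> = 1" unfolding eh by (rule hh)
  have hve: "sc \<eta> v + sc \<eta> v = v" for v unfolding eh by (rule hv)
  define \<alpha> \<beta> w where "\<alpha> = cA x" "\<beta> = cB x" "w = cW x"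
  note eqs = axis_eqs[OF axx x0, unfolded xz, folded \<alpha>_\<beta>_w_def]
  have hx: "x = sc \<alpha> a + sc \<beta> b + w" using coord_dec[of x] xz unfolding \<alpha>_\<beta>_w_def by simp
  have wW: "w \<in> W" unfolding \<alpha>_\<beta>_w_def by simp
  note simps = yZ wW mult_rules coord_lin coord_Z coord_W coord_basic prod_mem madd1 madd2 msc1 msc2
  show ?thesis
  proof (cases "w = 0")
    case True
    then show ?thesis unfolding hx using yZ by (simp add: madd1 msc1)
  next
    case False
    have "sc (1/2 - (\<alpha> + \<beta>) * \<eta>) w = 0" using eqs(4) by (simp add: m01)
    then have "1/2 - (\<alpha> + \<beta>) * \<eta> = 0" using False by simp
    then have "(\<alpha> + \<beta>) * \<eta> = 1 * \<eta>" by (simp add: eh[symmetric])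
    then have ab1: "\<alpha> + \<beta> = 1" using eta0 by (simp only: mult_cancel_right) simp
    have b1: "\<beta> = 1 - \<alpha>" and a1: "\<alpha> = 1 - \<beta>" using ab1 by (simp_all add: algebra_simps)
    have "cA (m w w) = \<alpha> - \<alpha> * \<alpha>" using eqs(1) by (simp add: algebra_simps)
    then have cAw: "cA (m w w) = \<alpha> * \<beta>" unfolding b1 by (simp add: algebra_simps)
    have "cB (m w w) = \<beta> - \<beta> * \<beta>" using eqs(2) by (simp add: algebra_simps)
    then have cBw: "cB (m w w) = \<alpha> * \<beta>" unfolding a1 by (simp add: algebra_simps)
    have cZw: "cZ (m w w) = 0" using eqs(3) by (simp add: m01)
    have ww: "m w w = sc (\<alpha> * \<beta>) a + sc (\<alpha> * \<beta>) b" by (rule coord_inj) (use cAw cBw cZw wW in simp_all)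
    define v where "v = m y w"
    have vW: "v \<in> W" unfolding v_def using yZ wW by simp
    have xy: "m x y = v" unfolding hx v_def using yZ by (simp add: madd1 msc1 mcomm[of w y])
    have Qy: "m y (m y w) - sc \<eta> (m y w) = sc ((1 - \<eta>) * lam y w) y" by (rule ax_quad[OF axy y0])
    have "cW (m y (m y w) - sc \<eta> (m y w)) = m y v - sc \<eta> v" unfolding v_def[symmetric] using yZ vW by simp
    moreover have "cW (sc ((1 - \<eta>) * lam y w) y) = 0" using yZ by simp
    ultimately have yv: "m y v = sc \<eta> v" using Qy by simp
    have xv: "m x v = sc \<eta> v + m w v"
    proof -
      have "m x v = sc (\<alpha> * \<eta>) v + sc (\<beta> * \<eta>) v + m w v" unfolding hx using vW by (simp add: madd1 msc1)
      also have "sc (\<alpha> * \<eta>) v + sc (\<beta> * \<eta>) v = sc ((\<alpha> + \<beta>) * \<eta>) v" by (simp add: distrib_right scale_left_distrib)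
      finally show ?thesis using ab1 by simp
    qed
    have Qx: "m x (m x y) - sc \<eta> (m x y) = sc ((1 - \<eta>) * lam x y) x" by (rule ax_quad[OF axx x0])
    then have "m w v = sc ((1 - \<eta>) * lam x y) x" unfolding xy xv by simp
    then have "cW (m w v) = sc ((1 - \<eta>) * lam x y) w" using \<alpha>_\<beta>_w_def by simp
    then have "sc ((1 - \<eta>) * lam x y) w = 0" using wW vW by simp
    then have "(1 - \<eta>) * lam x y = 0" using False by simp
    then have wv0: "m w v = 0" using \<open>m w v = sc ((1 - \<eta>) * lam x y) x\<close> by simp
    define t where "t = sc \<beta> a + sc \<alpha> b - w"
    have "m x t = sc (\<alpha> * \<beta>) a + sc (\<alpha> * \<beta>) b - m w w" unfolding hx t_def using wW
      by (simp add: simps mdiff1 mdiff2 algebra_simps)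
    then have tE: "t \<in> E x 0" unfolding memE ww by simp
    have "m x (y - (v + v)) = v - (sc \<eta> v + sc \<eta> v)" using xy xv wv0 by (simp add: mdiff2 madd2)
    then have sE: "y - (v + v) \<in> E x 0" unfolding memE hve by simp
    have "m (y - (v + v)) t \<in> E x 0" by (rule f00[OF axx sE tE])
    moreover have "m y t = - v" unfolding t_def v_def using yZ wW by (simp add: mdiff2 madd2 msc2)
    moreover have "m (v + v) t = v"
    proof -
      have abe: "\<alpha> * \<eta> + \<beta> * \<eta> = \<eta>" using ab1 by (metis distrib_right mult_1)
      have "m v t = sc \<beta> (sc \<eta> v) + sc \<alpha> (sc \<eta> v) - m w v" unfolding t_def using vW by (simp add: mdiff2 madd2 msc2 mcomm[of v w])
      also have "\<dots> = sc \<eta> v" using wv0 abe by (simp add: scale_left_distrib[symmetric] add.commute)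
      finally have "m v t = sc \<eta> v" .
      then show ?thesis by (simp add: madd1 hve)
    qed
    ultimately have "m (y - (v + v)) t = - v - v" by (simp add: mdiff1)
    moreover have "m x (- v - v) = - v"
    proof -
      have "m x (- v - v) = - (sc \<eta> v + sc \<eta> v)" using xv wv0 by (simp add: mdiff2 mneg2 algebra_simps)
      then show ?thesis by (simp only: hve)
    qed
    ultimately have "- v = 0" by (metis \<open>m (y - (v + v)) t \<in> E x 0\<close> memE scale_zero_left)
    then show ?thesis using xy by simp
  qed
qed

lemma inZ: "cA y = 0 \<Longrightarrow> cB y = 0 \<Longrightarrow> cW y = 0 \<Longrightarrow> y \<in> Z"
  using coord_dec[of y] cZ_mem[of y] by simp

lemma G1: assumes eh: "\<eta> = 1/2" and axx: "ax x" and x0: "x \<noteq> 0" and xz: "cZ x = 0"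
  and axy: "ax y" and y0: "y \<noteq> 0" and xy: "m x y \<noteq> 0" shows "cZ y = 0"
proof (rule ccontr)
  assume "cZ y \<noteq> 0"
  then have "y \<in> Z" using UZ[OF axy y0 eh] inZ by blast
  then show False using K[OF eh axx x0 xz axy y0] xy by simp
qed

lemma G2: assumes eh: "\<eta> = 1/2" and axx: "ax x" and x0: "x \<noteq> 0" and xz: "cZ x = 0"
  and axy: "ax y" and yz: "cZ y = 0" shows "cZ (tau x y) = 0"
proof (rule ccontr)
  assume ne: "cZ (tau x y) \<noteq> 0"
  have ax': "ax (tau x y)" by (rule tau_axis[OF axx x0 axy])
  have y'0: "tau x y \<noteq> 0" using ne by auto
  have "tau x y \<in> Z" using UZ[OF ax' y'0 eh] inZ ne by blast
  then have "m x (tau x y) = 0" by (rule K[OF eh axx x0 xz ax' y'0])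
  then have "tau x y \<in> E x 0" by (simp add: memE)
  then have "tau x (tau x y) = tau x y" using tau_pm[OF axx, of "tau x y" 0] E_0 unfolding Aplus_def by force
  then have "y = tau x y" using tau_props(1)[OF axx x0] by simp
  then show False using ne yz by simp
qed

lemma G3: assumes axx: "ax x" and x0: "x \<noteq> 0"
  shows "m x y = sc (lam x y) x + sc \<eta> (sc (1/2) (y - tau x y))"
proof -
  have "pre x y + pre x y = y - tau x y"
  proof -
    have "y - tau x y = (pr1 x y + pr0 x y + pre x y) - (pr1 x y + pr0 x y - pre x y)"
      using dec_props(4)[OF axx, of y] unfolding tau_def by (rule arg_cong[where f="\<lambda>t. t - _"])
    then show ?thesis by (simp add: algebra_simps)
  qed
  then have "pre x y = sc (1/2) (y - tau x y)" by (rule half)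
  then show ?thesis using mx_dec[OF axx x0, of y] by simp
qed

lemma span_mult: assumes B: "\<And>x y. x \<in> B \<Longrightarrow> y \<in> B \<Longrightarrow> m x y \<in> span B"
  and u: "u \<in> span B" and v: "v \<in> span B" shows "m u v \<in> span B"
proof -
  have "\<forall>v\<in>span B. m u v \<in> span B" using u
  proof (induct rule: span_induct)
    case base show ?case
      unfolding subspace_def by (auto simp: madd1 msc1 m01 span_add span_scale span_zero)
  next
    case (step x)
    have "m x v \<in> span B" if "v \<in> span B" for v using that
    proof (induct rule: span_induct)
      case base show ?case unfolding subspace_def by (auto simp: madd2 msc2 m02 span_add span_scale span_zero)
    next
      case (step y) then show ?case using B[OF \<open>x \<in> B\<close>] by blast
    qed
    then show ?case by blast
  qed
  then show ?thesis using v by blast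
qed

end

locale ABG = AB +
  fixes A
  assumes axes: "\<forall>x\<in>A. ax x" and gen: "generated sc m A = UNIV" and conn: "delta_connected m A"
    and aA: "a \<in> A" and bA: "b \<in> A"
begin

abbreviation R where "R \<equiv> (\<lambda>u v. u \<in> A \<and> v \<in> A \<and> u \<noteq> v \<and> m u v \<noteq> 0)"

lemma path: "x \<in> A \<Longrightarrow> y \<in> A \<Longrightarrow> R\<^sup>*\<^sup>* x y" using conn unfolding delta_connected_def by blast

lemma eh: "\<eta> = 1/2"
proof -
  have "R\<^sup>*\<^sup>* a b" by (rule path[OF aA bA])
  then obtain c where "R a c" using ab by (cases rule: converse_rtranclpE) auto
  then have cA': "c \<in> A" and ac: "a \<noteq> c" "m a c \<noteq> 0" by auto
  have c0: "c \<noteq> 0" using ac(2) by (auto simp: m02)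
  show ?thesis by (rule eta_half[OF _ c0 ac(2)]) (use axes cA' ac(1) in auto)
qed

lemma A_U: "x \<in> A \<Longrightarrow> cZ x = 0"
proof -
  assume xA: "x \<in> A"
  have "R\<^sup>*\<^sup>* a x" by (rule path[OF aA xA])
  then show "cZ x = 0"
  proof (induct rule: rtranclp_induct)
    case base then show ?case by simp
  next
    case (step u v)
    then have uA: "u \<in> A" and vA: "v \<in> A" and uv: "m u v \<noteq> 0" by auto
    have u0: "u \<noteq> 0" using uv by (auto simp: m01)
    have v0: "v \<noteq> 0" using uv by (auto simp: m02)
    show ?case by (rule G1[OF eh _ u0 step(3) _ v0 uv]) (use axes uA vA in auto)
  qed
qed

definition "AU = {x. ax x \<and> cZ x = 0}"

lemma AU_mult: "x \<in> AU \<Longrightarrow> y \<in> AU \<Longrightarrow> m x y \<in> span AU"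
proof -
  assume x: "x \<in> AU" and y: "y \<in> AU"
  show ?thesis
  proof (cases "x = 0")
    case True then show ?thesis by (simp add: m01 span_zero)
  next
    case False
    have axx: "ax x" and xz: "cZ x = 0" and axy: "ax y" and yz: "cZ y = 0" using x y by (auto simp: AU_def)
    have "tau x y \<in> AU" unfolding AU_def using tau_axis[OF axx False axy] G2[OF eh axx False xz axy yz] by simp
    then have "tau x y \<in> span AU" "x \<in> span AU" "y \<in> span AU" using x y by (auto intro: span_base)
    then show ?thesis unfolding G3[OF axx False] by (intro span_add span_scale span_diff)
  qed
qed

lemma all_U: "cZ x = 0"
proof -
  have "subalgebra sc m (span AU)" unfolding subalgebra_def
    using span_zero span_add span_scale span_mult[OF AU_mult] by blast
  moreover have "A \<subseteq> span AU" using axes A_U by (auto simp: AU_def intro: span_base)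
  ultimately have "generated sc m A \<subseteq> span AU" unfolding generated_def by blast
  then have xs: "x \<in> span AU" using gen by blast
  have "subspace {x. cZ x = 0}" unfolding subspace_def by simp
  then show ?thesis using span_minimal[of AU "{x. cZ x = 0}"] xs by (auto simp: AU_def)
qed

lemma Wspan: "w \<in> span AU"
proof -
  have "subalgebra sc m (span AU)" unfolding subalgebra_def
    using span_zero span_add span_scale span_mult[OF AU_mult] by blast
  moreover have "A \<subseteq> span AU" using axes A_U by (auto simp: AU_def intro: span_base)
  ultimately have "generated sc m A \<subseteq> span AU" unfolding generated_def by blast
  then show ?thesis using gen by blast
qed

lemma ehh: "\<eta> + \<eta> = 1" unfolding eh by (rule hh)
lemma hve: "sc \<eta> v + sc \<eta> v = v" unfolding eh by (rule hv)

lemma dec2: "x = sc (cA x) a + sc (cB x) b + cW x" using coord_dec[of x] all_U[of x] by simp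

lemma eid: "m (a + b) x = x"
proof -
  have "m (a + b) x = sc (cA x) a + sc \<eta> (cW x) + (sc (cB x) b + sc \<eta> (cW x))" using ma_dec mb_dec by (simp add: madd1)
  also have "\<dots> = sc (cA x) a + sc (cB x) b + (sc \<eta> (cW x) + sc \<eta> (cW x))" by (simp add: algebra_simps)
  also have "\<dots> = x" by (simp only: hve) (rule dec2[symmetric])
  finally show ?thesis .
qed
lemma eid2: "m x (a + b) = x" using eid mcomm by metis

lemma ww_ab: assumes "w \<in> W" "w' \<in> W" shows "m w w' = sc (cA (m w w')) a + sc (cB (m w w')) b"
  using dec2[of "m w w'"] assms by simp

lemma pq_axis: assumes axx: "ax x" and xz: "cZ x = 0" and w'W: "w' \<in> W"
  shows "cA (m (cW x) w') = cB (m (cW x) w')"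
proof (cases "x = 0 \<or> cW x = 0")
  case True
  then show ?thesis by (auto simp: m01)
next
  case False
  then have x0: "x \<noteq> 0" and w0: "cW x \<noteq> 0" by auto
  define \<alpha> \<beta> w where "\<alpha> = cA x" "\<beta> = cB x" "w = cW x"
  note eqs = axis_eqs[OF axx x0, unfolded xz, folded \<alpha>_\<beta>_w_def]
  have hx: "x = sc \<alpha> a + sc \<beta> b + w" using coord_dec[of x] xz unfolding \<alpha>_\<beta>_w_def by simp
  have wW: "w \<in> W" unfolding \<alpha>_\<beta>_w_def by simp
  have w0': "w \<noteq> 0" using w0 \<alpha>_\<beta>_w_def by simp
  have "sc (1/2 - (\<alpha> + \<beta>) * \<eta>) w = 0" using eqs(4) by (simp add: m01)
  then have "1/2 - (\<alpha> + \<beta>) * \<eta> = 0" using w0' by simp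
  then have "(\<alpha> + \<beta>) * \<eta> = 1 * \<eta>" by (simp add: eh[symmetric])
  then have ab1: "\<alpha> + \<beta> = 1" using eta0 by (simp only: mult_cancel_right) simp
  define p q where "p = cA (m w w')" "q = cB (m w w')"
  have mww: "m w w' = sc p a + sc q b" unfolding p_q_def by (rule ww_ab[OF wW w'W])
  have xw: "m x w' = sc \<eta> w' + (sc p a + sc q b)"
  proof -
    have "m x w' = sc (\<alpha> * \<eta>) w' + sc (\<beta> * \<eta>) w' + m w w'" unfolding hx using w'W by (simp add: madd1 msc1)
    also have "sc (\<alpha> * \<eta>) w' + sc (\<beta> * \<eta>) w' = sc ((\<alpha> + \<beta>) * \<eta>) w'" by (simp add: distrib_right scale_left_distrib)
    finally show ?thesis using ab1 mww by simp
  qed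
  define k where "k = (1 - \<eta>) * lam x w'"
  have Q: "m x (m x w') - sc \<eta> (m x w') = sc k x" unfolding k_def by (rule ax_quad[OF axx x0])
  have "m x (m x w') = sc \<eta> (m x w') + (sc p (m x a) + sc q (m x b))"
  proof -
    have "m x (m x w') = m x (sc \<eta> w' + (sc p a + sc q b))" using xw by (rule arg_cong)
    also have "\<dots> = sc \<eta> (m x w') + (sc p (m x a) + sc q (m x b))" by (simp add: madd2 msc2)
    finally show ?thesis .
  qed
  then have "sc p (m x a) + sc q (m x b) = sc k x" using Q by simp
  moreover have "m x a = sc \<alpha> a + sc \<eta> w" "m x b = sc \<beta> b + sc \<eta> w" unfolding \<alpha>_\<beta>_w_def by (rule my_a, rule my_b)
  ultimately have E: "sc p (sc \<alpha> a + sc \<eta> w) + sc q (sc \<beta> b + sc \<eta> w) = sc k (sc \<alpha> a + sc \<beta> b + w)" using hx by simp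
  have e1: "p * \<alpha> = k * \<alpha>" using arg_cong[OF E, of cA] wW by (simp add: mult.commute)
  have e2: "q * \<beta> = k * \<beta>" using arg_cong[OF E, of cB] wW by (simp add: mult.commute)
  have "sc (p * \<eta>) w + sc (q * \<eta>) w = sc k w" using arg_cong[OF E, of cW] wW by simp
  then have "sc ((p + q) * \<eta>) w = sc k w" by (simp add: distrib_right scale_left_distrib)
  then have e3: "k = (p + q) * \<eta>" using w0' by simp
  have "p = q" by (rule S3[OF e1 e2 e3 ehh ab1])
  then show ?thesis unfolding p_q_def \<alpha>_\<beta>_w_def by simp
qed

lemma pq: assumes "w \<in> W" "w' \<in> W" shows "cA (m w w') = cB (m w w')"
proof -
  have "\<forall>w'\<in>W. cA (m (cW x) w') = cB (m (cW x) w')" if "x \<in> span AU" for x using that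
  proof (induct rule: span_induct)
    case base show ?case unfolding subspace_def by (simp add: madd1 msc1 m01)
  next
    case (step x) then show ?case using pq_axis by (auto simp: AU_def)
  qed
  then have "\<forall>w'\<in>W. cA (m (cW w) w') = cB (m (cW w) w')" using Wspan[of w] by blast
  then show ?thesis using assms coord_W(3)[OF assms(1)] by simp
qed

definition "Vc = {x. cA x + cB x = 0}"
definition "Bf u v = cA (m u v)"
definition "phi p = sc (fst p) (a + b) + snd p"

lemma V_prod: assumes "u \<in> Vc" "v \<in> Vc" shows "m u v = sc (Bf u v) (a + b)"
proof -
  define \<alpha> \<alpha>' w w' where "\<alpha> = cA u" "\<alpha>' = cA v" "w = cW u" "w' = cW v"
  have cBu: "cB u = - cA u" and cBv: "cB v = - cA v" using assms unfolding Vc_def by (simp_all add: eq_neg_iff_add_eq_0 add.commute)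
  have hu: "u = sc \<alpha> a + sc (- \<alpha>) b + w" unfolding \<alpha>_\<alpha>'_w_w'_def cBu[symmetric] by (rule dec2)
  have hv: "v = sc \<alpha>' a + sc (- \<alpha>') b + w'" unfolding \<alpha>_\<alpha>'_w_w'_def cBv[symmetric] by (rule dec2)
  have wW: "w \<in> W" "w' \<in> W" unfolding \<alpha>_\<alpha>'_w_w'_def by simp_all
  have muv: "m u v = m (sc \<alpha> a + sc (- \<alpha>) b + w) (sc \<alpha>' a + sc (- \<alpha>') b + w')" using hu hv by simp
  show ?thesis
  proof (rule coord_inj)
    show "cA (m u v) = cA (sc (Bf u v) (a + b))" by (simp add: Bf_def)
    show "cB (m u v) = cB (sc (Bf u v) (a + b))" unfolding Bf_def muv using wW pq[OF wW] by (simp add: madd1 madd2 msc1 msc2 mdiff1 mdiff2)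
    show "cZ (m u v) = cZ (sc (Bf u v) (a + b))" using all_U by simp
    show "cW (m u v) = cW (sc (Bf u v) (a + b))" unfolding muv using wW by (simp add: madd1 madd2 msc1 msc2 mdiff1 mdiff2)
  qed
qed

lemma phi_mult: assumes uV: "u \<in> Vc" and vV: "v \<in> Vc"
  shows "phi (Jprod sc Bf (c, u) (d, v)) = m (phi (c, u)) (phi (d, v))"
proof -
  define e where "e = a + b"
  have ee: "m e e = e" and ev: "m e v = v" and ue: "m u e = u" and uv: "m u v = sc (Bf u v) e"
    unfolding e_def using eid[of "a + b"] eid[of v] eid2[of u] V_prod[OF uV vV] by auto
  have "m (phi (c, u)) (phi (d, v)) = m (sc c e + u) (sc d e + v)" by (simp add: phi_def e_def)
  also have "\<dots> = sc (c * d) e + sc c v + sc d u + sc (Bf u v) e"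
    by (simp add: madd1 madd2 msc1 msc2 ee ev ue uv algebra_simps)
  also have "\<dots> = phi (Jprod sc Bf (c, u) (d, v))" by (simp add: phi_def Jprod_def e_def[symmetric] scale_left_distrib algebra_simps)
  finally show ?thesis by simp
qed

lemma clif: "clifford_type sc m"
  unfolding clifford_type_def
proof (intro exI conjI)
  show "subspace Vc" unfolding subspace_def Vc_def by (auto simp: algebra_simps distrib_left[symmetric])
  show "sym_bilinear_on sc Vc Bf" unfolding sym_bilinear_on_def Bf_def
  proof (intro conjI)
    show "\<forall>u\<in>Vc. \<forall>v\<in>Vc. cA (m u v) = cA (m v u)" by (metis mcomm)
  qed (simp_all add: madd1 msc1)
  show "bij_betw phi (UNIV \<times> Vc) UNIV" unfolding bij_betw_def
  proof
    show "inj_on phi (UNIV \<times> Vc)"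
    proof (rule inj_onI)
      fix p q assume p: "p \<in> UNIV \<times> Vc" and q: "q \<in> UNIV \<times> Vc" and e: "phi p = phi q"
      obtain c u d v where pq: "p = (c, u)" "q = (d, v)" by (cases p, cases q) auto
      have uv: "cA u + cB u = 0" "cA v + cB v = 0" using p q pq by (auto simp: Vc_def)
      have e': "sc c (a + b) + u = sc d (a + b) + v" using e pq by (simp add: phi_def)
      have 1: "c + cA u = d + cA v" using arg_cong[OF e', of cA] by simp
      have 2: "c + cB u = d + cB v" using arg_cong[OF e', of cB] by simp
      have uv': "cB u = - cA u" "cB v = - cA v" using uv by (simp_all add: eq_neg_iff_add_eq_0 add.commute)
      have "(c + cA u) + (c + cB u) = (d + cA v) + (d + cB v)" using 1 2 by simp
      then have "2 * c = 2 * d" using uv' by (simp add: algebra_simps)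
      then have cd: "c = d" using two by simp
      then have "u = v" using e' by simp
      then show "p = q" using pq cd by simp
    qed
    show "phi ` (UNIV \<times> Vc) = UNIV"
    proof (intro set_eqI iffI)
      fix x :: 'b
      define c where "c = (cA x + cB x) / 2"
      have cc: "c + c = cA x + cB x" unfolding c_def mult_2[symmetric] using two by simp
      have "cA (x - sc c (a + b)) + cB (x - sc c (a + b)) = 0" using cc by (simp add: algebra_simps)
      then have "(c, x - sc c (a + b)) \<in> UNIV \<times> Vc" by (simp add: Vc_def)
      moreover have "phi (c, x - sc c (a + b)) = x" by (simp add: phi_def)
      ultimately show "x \<in> phi ` (UNIV \<times> Vc)" by (metis image_eqI)
    qed simp
  qed
  show "\<forall>p\<in>UNIV \<times> Vc. \<forall>q\<in>UNIV \<times> Vc. phi (fst p + fst q, snd p + snd q) = phi p + phi q"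
    by (simp add: phi_def scale_left_distrib algebra_simps)
  show "\<forall>c. \<forall>p\<in>UNIV \<times> Vc. phi (c * fst p, sc c (snd p)) = sc c (phi p)"
    by (simp add: phi_def scale_right_distrib)
  show "\<forall>p\<in>UNIV \<times> Vc. \<forall>q\<in>UNIV \<times> Vc. phi (Jprod sc Bf p q) = m (phi p) (phi q)"
    using phi_mult by auto
qed

end

theorem theoremB:
  fixes sc :: "'f::field \<Rightarrow> 'v::ab_group_add \<Rightarrow> 'v"
    and m :: "'v \<Rightarrow> 'v \<Rightarrow> 'v"
    and \<eta> :: 'f
    and \<A> :: "'v set"
    and a b :: 'v
  assumes char: "(2::'f) \<noteq> 0"
    and eta: "\<eta> \<noteq> 0" "\<eta> \<noteq> 1"
    and alg: "primitive_axial_jordan sc m \<eta>"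
    and axes: "\<forall>x\<in>\<A>. is_axis sc m \<eta> x"
    and gen: "generated sc m \<A> = UNIV"
    and conn: "delta_connected m \<A>"
    and ab: "a \<in> \<A>" "b \<in> \<A>" "a \<noteq> b"
    and tau: "miyamoto sc m \<eta> a = miyamoto sc m \<eta> b" "miyamoto sc m \<eta> a \<noteq> id"
  shows "\<eta> = 1 / 2 \<and> (\<forall>x. m (a + b) x = x \<and> m x (a + b) = x) \<and> clifford_type sc m"
proof -
  have CA: "comm_algebra sc m" using alg by (simp add: primitive_axial_jordan_def)
  interpret AX sc m \<eta> by (unfold_locales) (use CA char eta in auto)
  have axa: "is_axis sc m \<eta> a" and axb: "is_axis sc m \<eta> b" using axes ab by auto
  interpret ABG sc m \<eta> a b \<A>
  proof (unfold_locales)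
    show "is_axis sc m \<eta> a" "is_axis sc m \<eta> b" "a \<noteq> b" by (fact axa, fact axb, fact ab(3))
    show "tau a = tau b" using tau(1) miy[OF axa] miy[OF axb] by simp
    show "tau a \<noteq> id" using tau(2) miy[OF axa] by simp
  qed (use axes gen conn ab in auto)
  show ?thesis using eh eid eid2 clif by blast
qed

end
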